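(* Let $(C,\mathfrak p,\mathfrak d)$ be a regular $q$-cycle coalgebra with $\mathfrak p_{11}^1\ne 0$. Then $(C,\mathfrak p,\mathfrak d)$ is equivalent, via a map $f_\lambda$ ($\lambda\in K^\times$), to a unique standard cycle coalgebra of degree $v_0=1$.
   Context: $K$ is an algebraically closed field of characteristic $0$ and $n\ge2$. $C$ is the coalgebra dual to $K[y]/\langle y^n\rangle$: basis $x_0,\dots,x_{n-1}$, $\Delta(x_i)=\sum_{j+k=i}x_j\otimes x_k$, $\epsilon(x_i)=\delta_{i0}$; $C\otimes C$ has the tensor product coalgebra structure; Sweedler notation $\Delta(b)=b_{(1)}\otimes b_{(2)}$. For linear maps $\mathfrak p,\mathfrak d\colon C\otimes C\to C$ write $a\cdot b=\mathfrak p(a\otimes b)$, $a:b=\mathfrak d(a\otimes b)$, $\mathfrak p(x_i\otimes x_j)=\sum_{k=0}^{n-1}\mathfrak p_{ij}^kx_k$, $\mathfrak d(x_i\otimes x_j)=\sum_{k=0}^{n-1}\mathfrak d_{ij}^kx_k$. A triple $(C,\mathfrak p,\mathfrak d)$ with $\mathfrak p,\mathfrak d$ coalgebra morphisms is a regular $q$-magma coalgebra if there are coalgebra morphisms $a\otimes b\mapsto a^b$, $a\otimes b\mapsto a_b$ from $C\otimes C$ to $C$ with $a^{b_{(1)}}\cdot b_{(2)}=(a\cdot b_{(1)})^{b_{(2)}}=\epsilon(b)a$ and $(a:b_{(2)})_{b_{(1)}}=a_{b_{(2)}}:b_{(1)}=\epsilon(b)a$. It is a regular $q$-cycle coalgebra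 if moreover for all $a,b,c$: (1) $(a\cdot b_{(1)})\cdot(c:b_{(2)})=(a\cdot c_{(2)})\cdot(b\cdot c_{(1)})$; (2) $(a\cdot b_{(1)}):(c\cdot b_{(2)})=(a:c_{(2)})\cdot(b:c_{(1)})$; (3) $(a:b_{(1)}):(c:b_{(2)})=(a:c_{(2)}):(b\cdot c_{(1)})$. A cycle coalgebra is $(C,\mathfrak p)$ with $(C,\mathfrak p,\mathfrak p)$ a regular $q$-cycle coalgebra. Equivalence: for $\lambda\in K^\times$ set $\bar{\mathfrak p}_{ij}^k=\lambda^{k-i-j}\mathfrak p_{ij}^k$, $\bar{\mathfrak d}_{ij}^k=\lambda^{k-i-j}\mathfrak d_{ij}^k$; then the coalgebra automorphism $f_\lambda(x_i)=\lambda^ix_i$ is an isomorphism of $q$-magma coalgebras from $(C,\mathfrak p,\mathfrak d)$ to $(C,\bar{\mathfrak p},\bar{\mathfrak d})$, and $(C,\mathfrak p,\mathfrak d)$ is said to be equivalent via $f_\lambda$ to $(C,\bar{\mathfrak p},\bar{\mathfrak d})$. Standard cycle coalgebras: for $1\le v_0<n$ and $f=1+x^{v_0}+\sum_{v=v_0+1}^{n-1}p_vx^v\in K[x]$, put $g=f(f^{v_0}-1)/f'\in K[[x]]$, let $G=\sum_{v\ge0}g_v(x)y^v\in K[[x]][[y]]$ be the unique series with $g_0=x$ and $G_y=g(x)f'(y)G_x-(f(y)-1)G_y$, set $\mathfrak p_{uv}^0=\delta_{0,u+v}$, $\mathfrak p_{uv}^1=$ coefficient of $x^uy^v$ in $G$,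 and $\mathfrak p_{uv}^w=\sum_{u_1+u_2=u,\,v_1+v_2=v}\mathfrak p^1_{u_1v_1}\mathfrak p^{w-1}_{u_2v_2}$ for $w>1$. The map $\mathfrak p$ with these structure constants ($0\le u,v,w\le n-1$) makes $(C,\mathfrak p)$ a cycle coalgebra, called the standard cycle coalgebra $\mathrm{SCC}(f)$ associated with $f$; its degree is $v_0$. *)

theory Defs
  imports "HOL-Computational_Algebra.Computational_Algebra"
begin

text \<open>
  The coalgebra C has basis x_0,...,x_{n-1}.  A linear map
  m : C \<otimes> C \<rightarrow> C is encoded by its structure constants
  m i j k = coefficient of x_k in m(x_i \<otimes> x_j)  (only indices < n matter).
  All Sweedler-notation identities are linear in the arguments, hence it is
  equivalent to check them on basis elements; we write them out on basis
  elements, using \<Delta>(x_j) = \<Sum>_{j1+j2=j} x_{j1} \<otimes> x_{j2}.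
\<close>

type_synonym 'a sconst = "nat \<Rightarrow> nat \<Rightarrow> nat \<Rightarrow> 'a"

definition mv :: "'a sconst \<Rightarrow> nat \<Rightarrow> nat \<Rightarrow> nat \<Rightarrow> 'a" where
  "mv m i j = (\<lambda>k. m i j k)"

definition ap2 :: "nat \<Rightarrow> 'a::comm_ring_1 sconst \<Rightarrow> (nat \<Rightarrow> 'a) \<Rightarrow> (nat \<Rightarrow> 'a) \<Rightarrow> nat \<Rightarrow> 'a" where
  "ap2 n m F G l = (\<Sum>k<n. \<Sum>k'<n. F k * G k' * m k k' l)"

text \<open>m : C \<otimes> C \<rightarrow> C is a coalgebra morphism (C \<otimes> C with tensor product coalgebra
  structure): compatibility with counits and comultiplications.\<close>
definition coalg_morph :: "nat \<Rightarrow> 'a::comm_ring_1 sconst \<Rightarrow> bool" where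
  "coalg_morph n m \<longleftrightarrow>
     (\<forall>i<n. \<forall>j<n. m i j 0 = (if i = 0 \<and> j = 0 then 1 else 0)) \<and>
     (\<forall>i<n. \<forall>j<n. \<forall>k1<n. \<forall>k2<n.
        (if k1 + k2 < n then m i j (k1 + k2) else 0) =
        (\<Sum>i1\<le>i. \<Sum>j1\<le>j. m i1 j1 k1 * m (i - i1) (j - j1) k2))"

definition kd :: "nat \<Rightarrow> nat \<Rightarrow> 'a::comm_ring_1" where
  "kd a b = (if a = b then 1 else 0)"

definition regular_q_magma :: "nat \<Rightarrow> 'a::comm_ring_1 sconst \<Rightarrow> 'a sconst \<Rightarrow> bool" where
  "regular_q_magma n p d \<longleftrightarrow> coalg_morph n p \<and> coalg_morph n d \<and>
    (\<exists>u l. coalg_morph n u \<and> coalg_morph n l \<and>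
      (\<forall>i<n. \<forall>j<n. \<forall>r<n.
         \<comment> \<open>a^{b_(1)} \<cdot> b_(2) = \<epsilon>(b) a\<close>
         (\<Sum>j1\<le>j. ap2 n p (mv u i j1) (\<lambda>k. kd k (j - j1)) r) = kd j 0 * kd i r \<and>
         \<comment> \<open>(a \<cdot> b_(1))^{b_(2)} = \<epsilon>(b) a\<close>
         (\<Sum>j1\<le>j. ap2 n u (mv p i j1) (\<lambda>k. kd k (j - j1)) r) = kd j 0 * kd i r \<and>
         \<comment> \<open>(a : b_(2))_{b_(1)} = \<epsilon>(b) a\<close>
         (\<Sum>j1\<le>j. ap2 n l (mv d i (j - j1)) (\<lambda>k. kd k j1) r) = kd j 0 * kd i r \<and>
         \<comment> \<open>a_{b_(2)} : b_(1) = \<epsilon>(b) a\<close>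
         (\<Sum>j1\<le>j. ap2 n d (mv l i (j - j1)) (\<lambda>k. kd k j1) r) = kd j 0 * kd i r))"

text \<open>(C,p,d) is a regular q-cycle coalgebra; a = x_i, b = x_j, c = x_h\<close>
definition regular_q_cycle :: "nat \<Rightarrow> 'a::comm_ring_1 sconst \<Rightarrow> 'a sconst \<Rightarrow> bool" where
  "regular_q_cycle n p d \<longleftrightarrow> regular_q_magma n p d \<and>
    (\<forall>i<n. \<forall>j<n. \<forall>h<n. \<forall>r<n.
      \<comment> \<open>(1) (a\<cdot>b_(1))\<cdot>(c:b_(2)) = (a\<cdot>c_(2))\<cdot>(b\<cdot>c_(1))\<close>
      (\<Sum>j1\<le>j. ap2 n p (mv p i j1) (mv d h (j - j1)) r) =
      (\<Sum>h1\<le>h. ap2 n p (mv p i (h - h1)) (mv p j h1) r) \<and>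
      \<comment> \<open>(2) (a\<cdot>b_(1)):(c\<cdot>b_(2)) = (a:c_(2))\<cdot>(b:c_(1))\<close>
      (\<Sum>j1\<le>j. ap2 n d (mv p i j1) (mv p h (j - j1)) r) =
      (\<Sum>h1\<le>h. ap2 n p (mv d i (h - h1)) (mv d j h1) r) \<and>
      \<comment> \<open>(3) (a:b_(1)):(c:b_(2)) = (a:c_(2)):(b\<cdot>c_(1))\<close>
      (\<Sum>j1\<le>j. ap2 n d (mv d i j1) (mv d h (j - j1)) r) =
      (\<Sum>h1\<le>h. ap2 n d (mv d i (h - h1)) (mv p j h1) r))"

definition equiv_via :: "nat \<Rightarrow> 'a::field sconst \<Rightarrow> 'a sconst \<Rightarrow> 'a \<Rightarrow> 'a sconst \<Rightarrow> 'a sconst \<Rightarrow> bool" where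
  "equiv_via n p d lam P D \<longleftrightarrow> lam \<noteq> 0 \<and>
     (\<forall>i<n. \<forall>j<n. \<forall>k<n.
        P i j k = lam powi (int k - int i - int j) * p i j k \<and>
        D i j k = lam powi (int k - int i - int j) * d i j k)"

definition scc_f :: "nat \<Rightarrow> nat \<Rightarrow> (nat \<Rightarrow> 'a::field) \<Rightarrow> 'a fps" where
  "scc_f n v0 ps = 1 + fps_X ^ v0 + (\<Sum>v\<in>{v0+1..<n}. fps_const (ps v) * fps_X ^ v)"

definition scc_g :: "nat \<Rightarrow> nat \<Rightarrow> (nat \<Rightarrow> 'a::field) \<Rightarrow> 'a fps" where
  "scc_g n v0 ps = scc_f n v0 ps * (scc_f n v0 ps ^ v0 - 1) / fps_deriv (scc_f n v0 ps)"

text \<open>Elements of K[[x]][[y]] are 'a fps fps: outer variable y, inner variable x.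
  lift F is F(y) (a series in y with constant coefficients).\<close>
definition lift_y :: "'a::comm_ring_1 fps \<Rightarrow> 'a fps fps" where
  "lift_y F = Abs_fps (\<lambda>v. fps_const (F $ v))"

definition deriv_x :: "'a::comm_ring_1 fps fps \<Rightarrow> 'a fps fps" where
  "deriv_x G = Abs_fps (\<lambda>v. fps_deriv (G $ v))"

definition scc_G :: "nat \<Rightarrow> nat \<Rightarrow> (nat \<Rightarrow> 'a::field) \<Rightarrow> 'a fps fps" where
  "scc_G n v0 ps = (THE G. G $ 0 = fps_X \<and>
      fps_deriv G = fps_const (scc_g n v0 ps) * lift_y (fps_deriv (scc_f n v0 ps)) * deriv_x G
                    - (lift_y (scc_f n v0 ps) - 1) * fps_deriv G)"

text \<open>p^1_{uv} = coefficient of x^u y^v in G\<close>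
definition scc1 :: "nat \<Rightarrow> nat \<Rightarrow> (nat \<Rightarrow> 'a::field) \<Rightarrow> nat \<Rightarrow> nat \<Rightarrow> 'a" where
  "scc1 n v0 ps u v = (scc_G n v0 ps $ v) $ u"

fun scc_aux :: "nat \<Rightarrow> nat \<Rightarrow> (nat \<Rightarrow> 'a::field) \<Rightarrow> nat \<Rightarrow> nat \<Rightarrow> nat \<Rightarrow> 'a" where
  "scc_aux n v0 ps 0 u v = (if u + v = 0 then 1 else 0)"
| "scc_aux n v0 ps (Suc w) u v =
     (if w = 0 then scc1 n v0 ps u v
      else (\<Sum>u1\<le>u. \<Sum>v1\<le>v. scc1 n v0 ps u1 v1 * scc_aux n v0 ps w (u - u1) (v - v1)))"

text \<open>structure constants of SCC(f): scc n v0 ps u v w = p^w_{uv}\<close>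
definition scc :: "nat \<Rightarrow> nat \<Rightarrow> (nat \<Rightarrow> 'a::field) \<Rightarrow> 'a sconst" where
  "scc n v0 ps u v w = scc_aux n v0 ps w u v"

end

theory Submission
  imports Defs
begin


definition toF :: "(nat \<Rightarrow> nat \<Rightarrow> 'a::comm_ring_1) \<Rightarrow> 'a fps fps" where
  "toF Q = Abs_fps (\<lambda>j. Abs_fps (\<lambda>i. Q i j))"

lemma toF_nth[simp]: "toF Q $ j $ i = Q i j"
  by (simp add: toF_def)

lemma fps2_mult_nth: "((A::'a::comm_ring_1 fps fps) * B) $ j $ i =
   (\<Sum>j1\<le>j. \<Sum>i1\<le>i. A $ j1 $ i1 * B $ (j - j1) $ (i - i1))"
  by (simp add: fps_mult_nth atLeast0AtMost fps_sum_nth)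

lemma coalgD:
  assumes "coalg_morph n m" "i < n" "j < n" "k1 < n" "k2 < n"
  shows "(if k1 + k2 < n then m i j (k1 + k2) else 0) =
        (\<Sum>i1\<le>i. \<Sum>j1\<le>j. m i1 j1 k1 * m (i - i1) (j - j1) k2)"
  using assms unfolding coalg_morph_def by blast

lemma coalg0:
  assumes "coalg_morph n m" "i < n" "j < n"
  shows "m i j 0 = (if i = 0 \<and> j = 0 then 1 else 0)"
  using assms unfolding coalg_morph_def by blast

lemma coalg_pow:
  assumes "coalg_morph n m" "k < n" "i < n" "j < n"
  shows "m i j k = (toF (\<lambda>i j. m i j 1) ^ k) $ j $ i"
  using assms(2-4)
proof (induction k arbitrary: i j)
  case 0
  then show ?case using coalg0[OF assms(1)] by auto
next
  case (Suc k)
  show ?case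
  proof (cases "k = 0")
    case True then show ?thesis by simp
  next
    case False
    have "m i j (1 + k) = (\<Sum>i1\<le>i. \<Sum>j1\<le>j. m i1 j1 1 * m (i - i1) (j - j1) k)"
      using coalgD[OF assms(1), of i j 1 k] Suc.prems False by simp
    also have "\<dots> = (\<Sum>i1\<le>i. \<Sum>j1\<le>j. m i1 j1 1 * (toF (\<lambda>i j. m i j 1) ^ k) $ (j - j1) $ (i - i1))"
      using Suc by (intro sum.cong refl) auto
    also have "\<dots> = (toF (\<lambda>i j. m i j 1) ^ Suc k) $ j $ i"
      by (simp add: fps2_mult_nth sum.swap[of _ "{..i}"])
    finally show ?thesis by simp
  qed
qed

lemma coalg_pow_n:
  assumes "coalg_morph n m" "i < n" "j < n" "n \<ge> 2"
  shows "(toF (\<lambda>i j. m i j 1) ^ n) $ j $ i = 0"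
proof -
  obtain n' where n': "n = Suc n'" "n' \<ge> 1" using assms(4) by (cases n) auto
  have "0 = (\<Sum>i1\<le>i. \<Sum>j1\<le>j. m i1 j1 1 * m (i - i1) (j - j1) n')"
    using coalgD[OF assms(1-3), of 1 n'] n' by simp
  also have "\<dots> = (\<Sum>i1\<le>i. \<Sum>j1\<le>j. m i1 j1 1 * (toF (\<lambda>i j. m i j 1) ^ n') $ (j - j1) $ (i - i1))"
    using assms n' by (intro sum.cong refl arg_cong2[where f=times] coalg_pow[OF assms(1)]) auto
  also have "\<dots> = (toF (\<lambda>i j. m i j 1) ^ n) $ j $ i"
    using n' by (simp add: fps2_mult_nth sum.swap[of _ "{..i}"])
  finally show ?thesis by simp
qed

definition trm :: "nat \<Rightarrow> (nat \<Rightarrow> nat \<Rightarrow> nat \<Rightarrow> 'a::comm_ring_1) \<Rightarrow> 'a fps fps" where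
  "trm n m = toF (\<lambda>i j. if i < n \<and> j < n then m i j 1 else 0)"

lemma pow_local:
  assumes "\<And>i' j'. i' \<le> i \<Longrightarrow> j' \<le> j \<Longrightarrow> (Q::'a::comm_ring_1 fps fps) $ j' $ i' = Q' $ j' $ i'"
  shows "(Q ^ k) $ j $ i = (Q' ^ k) $ j $ i"
  using assms
proof (induction k arbitrary: i j)
  case 0
  then show ?case by simp
next
  case (Suc k)
  show ?case unfolding power_Suc fps2_mult_nth
    by (intro sum.cong refl arg_cong2[where f=times] Suc) auto
qed

lemma coalg_pow_tr:
  assumes "coalg_morph n m" "k < n" "i < n" "j < n"
  shows "m i j k = (trm n m ^ k) $ j $ i"
  unfolding coalg_pow[OF assms] trm_def using assms
  by (intro pow_local) auto

lemma coalg_pow_n_tr: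
  assumes "coalg_morph n m" "i < n" "j < n" "n \<ge> 2"
  shows "(trm n m ^ n) $ j $ i = 0"
  using coalg_pow_n[OF assms] unfolding trm_def using assms
  by (subst (asm) pow_local[where Q'="toF (\<lambda>i j. if i < n \<and> j < n then m i j 1 else 0)"]) auto

lemma trm_nth: "trm n m $ j $ i = (if i < n \<and> j < n then m i j 1 else 0)"
  by (simp add: trm_def)

lemma pow_row0:
  assumes "\<And>j. (Q::'a::comm_ring_1 fps fps) $ j $ 0 = 0" "i < k"
  shows "(Q ^ k) $ j $ i = 0"
  using assms(2)
proof (induction k arbitrary: i j)
  case 0
  then show ?case by simp
next
  case (Suc k)
  have "(Q ^ Suc k) $ j $ i = (\<Sum>j1\<le>j. \<Sum>i1\<le>i. Q $ j1 $ i1 * (Q ^ k) $ (j - j1) $ (i - i1))"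
    by (simp add: fps2_mult_nth)
  also have "\<dots> = 0"
  proof (intro sum.neutral ballI)
    fix j1 i1 assume "j1 \<in> {..j}" "i1 \<in> {..i}"
    show "Q $ j1 $ i1 * (Q ^ k) $ (j - j1) $ (i - i1) = 0"
    proof (cases "i1 = 0")
      case True then show ?thesis using assms(1) by simp
    next
      case False then show ?thesis using Suc \<open>i1 \<in> {..i}\<close> by auto
    qed
  qed
  finally show ?case .
qed

lemma pow_col1:
  assumes "\<And>j. (Q::'a::comm_ring_1 fps fps) $ j $ 0 = 0"
  shows "(Q ^ k) $ j $ 1 = (if k = 1 then Q $ j $ 1 else 0)"
proof (cases "k \<ge> 2")
  case True then show ?thesis using pow_row0[OF assms, of 1 k] by auto
next
  case False
  then have "k = 0 \<or> k = 1" by auto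
  then show ?thesis by (auto simp: fps_one_nth)
qed

lemma pow_row0_col: "((Q::'a::comm_ring_1 fps fps) ^ k) $ 0 = (Q $ 0) ^ k"
  by (simp add: fps_power_zeroth)

lemma pow_X_col:
  assumes "(Q::'a::comm_ring_1 fps fps) $ 0 = fps_X"
  shows "(Q ^ k) $ 0 $ i = (if i = k then 1 else 0)"
  by (simp add: pow_row0_col assms fps_X_power_nth)

lemma pow_row1_fps:
  assumes "(Q::'a::comm_ring_1 fps fps) $ 0 = fps_X"
  shows "(Q ^ k) $ 1 = of_nat k * fps_X ^ (k - 1) * Q $ 1"
proof (induction k)
  case 0
  then show ?case by (simp add: fps_one_nth)
next
  case (Suc k)
  have "(Q ^ Suc k) $ 1 = (\<Sum>j=0..1. Q $ j * (Q ^ k) $ (1 - j))"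
    by (simp add: fps_mult_nth)
  also have "\<dots> = fps_X * (of_nat k * fps_X ^ (k - 1) * Q $ 1) + Q $ 1 * fps_X ^ k"
    using Suc assms by (simp add: pow_row0_col)
  also have "\<dots> = of_nat (Suc k) * fps_X ^ k * Q $ 1"
    by (cases k) (simp_all add: algebra_simps)
  finally show ?case by simp
qed

lemma pow_row1:
  assumes "(Q::'a::comm_ring_1 fps fps) $ 0 = fps_X"
  shows "(Q ^ k) $ 1 $ i = (if 0 < k \<and> k \<le> i + 1 then of_nat k * Q $ 1 $ (i + 1 - k) else 0)"
proof -
  have e: "(Q ^ k) $ 1 = fps_const (of_nat k) * (fps_X ^ (k - 1) * Q $ 1)"
    using pow_row1_fps[OF assms, of k] by (simp add: mult.assoc fps_of_nat)
  have "(Q ^ k) $ 1 $ i = of_nat k * (fps_X ^ (k - 1) * Q $ 1) $ i"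
    unfolding e fps_mult_left_const_nth ..
  also have "\<dots> = (if 0 < k \<and> k \<le> i + 1 then of_nat k * Q $ 1 $ (i + 1 - k) else 0)"
    by (cases k) (auto simp: fps_X_power_mult_nth)
  finally show ?thesis .
qed


lemma pow_low_zero:
  assumes "\<And>j. j < v \<Longrightarrow> (A::'a::comm_ring_1 fps) $ j = 0" "j < k * v"
  shows "(A ^ k) $ j = 0"
  using assms(2)
proof (induction k arbitrary: j)
  case 0 then show ?case by simp
next
  case (Suc k)
  have "(A ^ Suc k) $ j = (\<Sum>i=0..j. A $ i * (A ^ k) $ (j - i))" by (simp add: fps_mult_nth)
  also have "\<dots> = 0"
  proof (intro sum.neutral ballI)
    fix i assume "i \<in> {0..j}"
    show "A $ i * (A ^ k) $ (j - i) = 0"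
    proof (cases "i < v")
      case True then show ?thesis using assms(1) by simp
    next
      case False then have "j - i < k * v" using Suc.prems \<open>i \<in> {0..j}\<close> by auto
      then show ?thesis using Suc.IH by simp
    qed
  qed
  finally show ?case .
qed

lemma S1_generic:
  fixes Q :: "'a::field_char_0 fps fps"
  assumes n2: "n \<ge> 2"
    and nil: "\<And>i j. i < n \<Longrightarrow> j < n \<Longrightarrow> (Q ^ n) $ j $ i = 0"
    and alpha: "Q $ 0 $ 1 \<noteq> 0"
    and supp: "\<And>i j. \<not> (i < n \<and> j < n) \<Longrightarrow> Q $ j $ i = 0"
  shows "Q $ j $ 0 = 0"
proof -
  have "(Q ^ n) $ 0 $ 0 = (Q $ 0 $ 0) ^ n" by (simp add: fps_power_zeroth)
  then have q00: "Q $ 0 $ 0 = 0" using nil[of 0 0] n2 by simp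
  show ?thesis
  proof (rule ccontr)
    assume "Q $ j $ 0 \<noteq> 0"
    then obtain v where v: "Q $ v $ 0 \<noteq> 0" "\<And>j. j < v \<Longrightarrow> Q $ j $ 0 = 0"
      using exists_least_iff[of "\<lambda>j. Q $ j $ 0 \<noteq> 0"] by blast
    have vn: "v < n" using v(1) supp[of 0 v] n2 by (cases "v < n") auto
    have v1: "v \<ge> 1" using v(1) q00 by (cases v) auto
    define A :: "'a fps fps" where "A = Abs_fps (\<lambda>j. fps_const (Q $ j $ 0))"
    define B where "B = Q - A"
    have QAB: "Q = A + B" by (simp add: B_def)
    have B0: "B $ j $ 0 = 0" for j by (simp add: B_def A_def)
    have A_low: "A $ j = 0" if "j < v" for j using v(2)[OF that] by (simp add: A_def)
    have B00: "B $ 0 = Q $ 0" using q00 by (intro fps_ext) (simp add: B_def A_def)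
    have Apow: "(A ^ k) $ b = 0" if "k \<ge> 2" "b \<le> v" for k b
    proof -
      have "b < k * v" using that v1 by (metis dual_order.strict_trans1 less_2_cases_iff linorder_not_le
          mult_le_mono1 nat_mult_1 nat_neq_iff one_add_one order.trans trans_le_add1 v1 that(1)
          mult_2 add_mono_thms_linordered_field(1) le_add2)
      then show ?thesis using pow_low_zero[OF A_low] by blast
    qed
    have "(Q ^ n) $ v $ (n - 1) = of_nat n * Q $ v $ 0 * (Q $ 0 $ 1) ^ (n - 1)"
    proof -
      have "(Q ^ n) = (\<Sum>k\<le>n. of_nat (n choose k) * A ^ k * B ^ (n - k))"
        unfolding QAB by (rule binomial_ring)
      then have "(Q ^ n) $ v $ (n - 1) = (\<Sum>k\<le>n. (of_nat (n choose k) * A ^ k * B ^ (n - k)) $ v $ (n - 1))"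
        by (simp add: fps_sum_nth)
      also have "\<dots> = (\<Sum>k\<in>{0,1}. (of_nat (n choose k) * A ^ k * B ^ (n - k)) $ v $ (n - 1))"
      proof (intro sum.mono_neutral_right ballI)
        fix k assume k: "k \<in> {..n} - {0, 1}"
        then have k2: "k \<ge> 2" by auto
        have "(of_nat (n choose k) * A ^ k * B ^ (n - k)) $ v =
              (\<Sum>i=0..v. (of_nat (n choose k) * A ^ k) $ i * (B ^ (n - k)) $ (v - i))"
          by (simp add: fps_mult_nth)
        also have "\<dots> = 0"
        proof (intro sum.neutral ballI)
          fix i assume "i \<in> {0..v}"
          then have "(A ^ k) $ i = 0" using Apow[OF k2] by auto
          then show "(of_nat (n choose k) * A ^ k) $ i * (B ^ (n - k)) $ (v - i) = 0"
            by (simp add: fps_of_nat[symmetric])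
        qed
        finally show "(of_nat (n choose k) * A ^ k * B ^ (n - k)) $ v $ (n - 1) = 0" by simp
      qed (use n2 in auto)
      also have "\<dots> = (B ^ n) $ v $ (n - 1) + of_nat n * (A * B ^ (n - 1)) $ v $ (n - 1)"
        by (simp add: fps_of_nat[symmetric] mult.assoc)
      also have "(B ^ n) $ v $ (n - 1) = 0"
        using pow_row0[of B "n - 1" n v] B0 n2 by simp
      also have "(A * B ^ (n - 1)) $ v = (\<Sum>i=0..v. A $ i * (B ^ (n - 1)) $ (v - i))"
        by (simp add: fps_mult_nth)
      also have "\<dots> = A $ v * (B ^ (n - 1)) $ 0"
        by (subst sum.remove[of _ v]) (auto intro!: sum.neutral simp: A_low)
      also have "(B ^ (n - 1)) $ 0 = (Q $ 0) ^ (n - 1)"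
        by (simp add: pow_row0_col B00)
      also have "(A $ v * (Q $ 0) ^ (n - 1)) $ (n - 1) = Q $ v $ 0 * (Q $ 0 $ 1) ^ (n - 1)"
        by (simp add: A_def startsby_zero_power_nth_same q00)
      finally show ?thesis by (simp add: mult.assoc)
    qed
    moreover have "(Q ^ n) $ v $ (n - 1) = 0" using nil vn n2 by simp
    ultimately show False using v(1) alpha n2 by simp
  qed
qed


lemma ap2_mv:
  assumes "coalg_morph n m1" "coalg_morph n m2" "i < n" "j < n" "h < n" "b < n"
  shows "ap2 n m (mv m1 i j) (mv m2 h b) r =
     (\<Sum>k<n. \<Sum>k'<n. (trm n m1 ^ k) $ j $ i * (trm n m2 ^ k') $ b $ h * m k k' r)"
  unfolding ap2_def mv_def using assms
  by (intro sum.cong refl) (simp add: coalg_pow_tr)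

lemma sum_delta_left: "a < (n::nat) \<Longrightarrow> (\<Sum>k<n. (if k = a then x else 0) * F k) = (x::'a::comm_ring_1) * F a"
proof -
  assume a: "a < n"
  have "(\<Sum>k<n. (if k = a then x else 0) * F k) = (\<Sum>k<n. if k = a then x * F a else 0)"
    by (intro sum.cong) auto
  then show ?thesis using a by simp
qed

lemma coalg_001:
  assumes "coalg_morph n (m :: nat \<Rightarrow> nat \<Rightarrow> nat \<Rightarrow> 'a::field_char_0)" "n \<ge> 2"
  shows "m 0 0 1 = 0"
proof -
  have "(trm n m ^ n) $ 0 $ 0 = (trm n m $ 0 $ 0) ^ n" by (simp add: fps_power_zeroth)
  then have "(trm n m $ 0 $ 0) ^ n = 0" using coalg_pow_n_tr[OF assms(1) _ _ assms(2), of 0 0] assms by simp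
  then show ?thesis using assms(2) by (simp add: trm_nth)
qed

lemma coalg_10k:
  assumes "coalg_morph n (m :: nat \<Rightarrow> nat \<Rightarrow> nat \<Rightarrow> 'a::field_char_0)" "n \<ge> 2" "k < n"
  shows "m 1 0 k = (if k = 1 then m 1 0 1 else 0)"
proof -
  have "m 1 0 k = ((trm n m $ 0) ^ k) $ 1"
    using coalg_pow_tr[OF assms(1) assms(3), of 1 0] assms by (simp add: fps_power_zeroth pow_row0_col)
  also have "\<dots> = (if k = 1 then m 1 0 1 else 0)"
  proof -
    have z: "trm n m $ 0 $ 0 = 0" using coalg_001[OF assms(1,2)] by (simp add: trm_nth)
    consider "k = 0" | "k = 1" | "k \<ge> 2" by linarith
    then show ?thesis
    proof cases
      case 1 then show ?thesis by (simp add: fps_one_nth)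
    next
      case 2 then show ?thesis using assms by (simp add: trm_nth)
    next
      case 3 then show ?thesis using startsby_zero_power_prefix[OF z, rule_format, of 1 k] by simp
    qed
  qed
  finally show ?thesis .
qed

lemma sum_delta_mid: "a < (n::nat) \<Longrightarrow> (\<Sum>k<n. x * (if k = a then 1 else 0) * F k) = (x::'a::comm_ring_1) * F a"
proof -
  assume a: "a < n"
  have "(\<Sum>k<n. x * (if k = a then 1 else 0) * F k) = (\<Sum>k<n. if k = a then x * F a else 0)"
    by (intro sum.cong) auto
  then show ?thesis using a by simp
qed

lemma regular_alpha:
  assumes "regular_q_magma n p d" "n \<ge> 2"
  shows "(p 1 0 1 :: 'a::field_char_0) \<noteq> 0" "d 1 0 1 \<noteq> 0"
proof -
  obtain u l where cu: "coalg_morph n u" and cl: "coalg_morph n l" and cp: "coalg_morph n p"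
    and cd: "coalg_morph n d"
    and R: "\<forall>i<n. \<forall>j<n. \<forall>r<n.
         (\<Sum>j1\<le>j. ap2 n p (mv u i j1) (\<lambda>k. kd k (j - j1)) r) = kd j 0 * kd i r \<and>
         (\<Sum>j1\<le>j. ap2 n u (mv p i j1) (\<lambda>k. kd k (j - j1)) r) = kd j 0 * kd i r \<and>
         (\<Sum>j1\<le>j. ap2 n l (mv d i (j - j1)) (\<lambda>k. kd k j1) r) = kd j 0 * kd i r \<and>
         (\<Sum>j1\<le>j. ap2 n d (mv l i (j - j1)) (\<lambda>k. kd k j1) r) = kd j 0 * kd i r"
    using assms(1) unfolding regular_q_magma_def by blast
  have n1: "1 < n" "0 < n" using assms(2) by auto
  have "ap2 n p (mv u 1 0) (\<lambda>k. kd k 0) 1 = 1"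
    using R[rule_format, of 1 0 1] n1 by (simp add: kd_def)
  moreover have "ap2 n p (mv u 1 0) (\<lambda>k. kd k 0) 1 = u 1 0 1 * p 1 0 1"
  proof -
    have "ap2 n p (mv u 1 0) (\<lambda>k. kd k 0) 1 = (\<Sum>k<n. \<Sum>k'<n. u 1 0 k * (if k' = 0 then 1 else 0) * p k k' 1)"
      unfolding ap2_def mv_def kd_def by simp
    also have "\<dots> = (\<Sum>k<n. u 1 0 k * p k 0 1)"
      using n1 by (intro sum.cong refl sum_delta_mid)
    also have "\<dots> = (\<Sum>k<n. (if k = 1 then u 1 0 1 else 0) * p k 0 1)"
    proof (intro sum.cong refl)
      fix k assume "k \<in> {..<n}"
      then have k: "k < n" by simp
      show "u 1 0 k * p k 0 1 = (if k = 1 then u 1 0 1 else 0) * p k 0 1"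
        using coalg_10k[OF cu assms(2) k] by simp
    qed
    also have "\<dots> = u 1 0 1 * p 1 0 1"
      by (rule sum_delta_left[OF n1(1)])
    finally show ?thesis .
  qed
  ultimately show "p 1 0 1 \<noteq> 0" by auto
  have "ap2 n l (mv d 1 0) (\<lambda>k. kd k 0) 1 = 1"
    using R[rule_format, of 1 0 1] n1 by (simp add: kd_def)
  moreover have "ap2 n l (mv d 1 0) (\<lambda>k. kd k 0) 1 = d 1 0 1 * l 1 0 1"
  proof -
    have "ap2 n l (mv d 1 0) (\<lambda>k. kd k 0) 1 = (\<Sum>k<n. \<Sum>k'<n. d 1 0 k * (if k' = 0 then 1 else 0) * l k k' 1)"
      unfolding ap2_def mv_def kd_def by simp
    also have "\<dots> = (\<Sum>k<n. d 1 0 k * l k 0 1)"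
      using n1 by (intro sum.cong refl sum_delta_mid)
    also have "\<dots> = (\<Sum>k<n. (if k = 1 then d 1 0 1 else 0) * l k 0 1)"
    proof (intro sum.cong refl)
      fix k assume "k \<in> {..<n}"
      then have k: "k < n" by simp
      show "d 1 0 k * l k 0 1 = (if k = 1 then d 1 0 1 else 0) * l k 0 1"
        using coalg_10k[OF cd assms(2) k] by simp
    qed
    also have "\<dots> = d 1 0 1 * l 1 0 1"
      by (rule sum_delta_left[OF n1(1)])
    finally show ?thesis .
  qed
  ultimately show "d 1 0 1 \<noteq> 0" by auto
qed


lemma pow_near_X:
  fixes phi :: "'a::comm_ring_1 fps"
  assumes "\<And>t. t < j \<Longrightarrow> phi $ t = (if t = 1 then 1 else 0)" "j \<ge> 2" "phi $ 0 = 0"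
  shows "k \<ge> 2 \<Longrightarrow> m \<le> j \<Longrightarrow> (phi ^ k) $ m = (if m = k then 1 else 0)"
proof (induction k arbitrary: m rule: less_induct)
  case (less k)
  obtain k' where k': "k = Suc k'" "k' \<ge> 1" using less.prems by (cases k) auto
  have step: "(phi ^ Suc k') $ m = (if m = 0 then 0 else (phi ^ k') $ (m - 1))"
  proof -
    have "(phi ^ Suc k') $ m = (\<Sum>t=0..m. phi $ t * (phi ^ k') $ (m - t))"
      by (simp add: fps_mult_nth)
    also have "\<dots> = (\<Sum>t\<in>(if m = 0 then {} else {1}). phi $ t * (phi ^ k') $ (m - t))"
    proof (intro sum.mono_neutral_right ballI)
      fix t assume t: "t \<in> {0..m} - (if m = 0 then {} else {1})"
      show "phi $ t * (phi ^ k') $ (m - t) = 0"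
      proof (cases "t = 0")
        case True then show ?thesis using assms(3) by simp
      next
        case False
        show ?thesis
        proof (cases "t < j")
          case True then show ?thesis using assms(1) t False by auto
        next
          case False
          then have "t = m" "m = j" using t less.prems by auto
          then show ?thesis using \<open>t = m\<close> startsby_zero_power[OF assms(3), of k'] k' by simp
        qed
      qed
    qed auto
    also have "\<dots> = (if m = 0 then 0 else (phi ^ k') $ (m - 1))"
      using assms(1)[of 1] assms(2) by auto
    finally show ?thesis .
  qed
  show ?case
  proof (cases "k' = 1")
    case True
    then show ?thesis using step k' less.prems assms(1)[of "m - 1"] by auto
  next
    case False
    then have "(phi ^ k') $ (m - 1) = (if m - 1 = k' then 1 else 0)"
      using less.IH[of k' "m - 1"] k' less.prems by auto
    then show ?thesis using step k' less.prems by auto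
  qed
qed

lemma comp_id:
  fixes phi :: "'a::field fps" and f :: "nat \<Rightarrow> 'a"
  assumes eq: "\<And>j. j < n \<Longrightarrow> f j = (\<Sum>k<n. f k * (phi ^ k) $ j)"
    and p0: "phi $ 0 = 0" and f1: "f 1 \<noteq> 0" and n2: "n \<ge> 2"
  shows "j < n \<Longrightarrow> phi $ j = (if j = 1 then 1 else 0)"
proof (induction j rule: less_induct)
  case (less j)
  show ?case
  proof (cases "j = 0")
    case True then show ?thesis using p0 by simp
  next
    case False
    show ?thesis
    proof (cases "j = 1")
      case True
      have "(\<Sum>k<n. f k * (phi ^ k) $ 1) = (\<Sum>k<n. if k = 1 then f 1 * phi $ 1 else 0)"
      proof (intro sum.cong refl)
        fix k
        show "f k * (phi ^ k) $ 1 = (if k = 1 then f 1 * phi $ 1 else 0)"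
        proof (cases "k \<ge> 2")
          case True then show ?thesis using startsby_zero_power_prefix[OF p0, rule_format, of 1 k] by auto
        next
          case False then have "k = 0 \<or> k = 1" by auto
          then show ?thesis by (auto simp: fps_one_nth)
        qed
      qed
      then have "f 1 = f 1 * phi $ 1" using eq[of 1] n2 by simp
      then show ?thesis using True f1 by simp
    next
      case False
      have j2: "j \<ge> 2" using \<open>j \<noteq> 0\<close> False by auto
      have IH: "\<And>t. t < j \<Longrightarrow> phi $ t = (if t = 1 then 1 else 0)" using less by auto
      have "(\<Sum>k<n. f k * (phi ^ k) $ j) = (\<Sum>k<n. (if k = 1 then f 1 * phi $ j else 0) + (if k = j then f j else 0))"
      proof (intro sum.cong refl)
        fix k
        show "f k * (phi ^ k) $ j = (if k = 1 then f 1 * phi $ j else 0) + (if k = j then f j else 0)"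
        proof (cases "k \<ge> 2")
          case True then show ?thesis using pow_near_X[OF IH j2 p0 True, of j] j2 by auto
        next
          case False then have "k = 0 \<or> k = 1" by auto
          then show ?thesis using j2 by (auto simp: fps_one_nth)
        qed
      qed
      also have "\<dots> = f 1 * phi $ j + f j" using less.prems n2 by (simp add: sum.distrib)
      finally have "f 1 * phi $ j = 0" using eq[of j] less.prems by simp
      then show ?thesis using f1 False by simp
    qed
  qed
qed


lemma ifz_mult: "(if P then x else 0) * y = (if P then x * y else (0::'a::comm_ring_1))"
  "y * (if P then x else 0) = (if P then y * x else (0::'a::comm_ring_1))"
  by auto

lemma sum_if_out: "(\<Sum>x\<in>A. if P then f x else 0) = (if P then (\<Sum>x\<in>A. f x) else 0)"
  by auto

lemma pow_col0:
  assumes "\<And>j. (Q::'a::comm_ring_1 fps fps) $ j $ 0 = 0"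
  shows "(Q ^ k) $ b $ 0 = (if k = 0 then (if b = 0 then 1 else 0) else 0)"
  using pow_row0[OF assms, of 0 k] by (cases k) (auto simp: fps_one_nth)

lemma pow_col1':
  assumes "\<And>j. (Q::'a::comm_ring_1 fps fps) $ j $ 0 = 0"
  shows "(Q ^ k) $ j $ Suc 0 = (if k = 1 then Q $ j $ 1 else 0)"
  using pow_col1[OF assms] by simp

locale qcyc =
  fixes n :: nat and p d :: "nat \<Rightarrow> nat \<Rightarrow> nat \<Rightarrow> 'a::field_char_0"
  assumes n2: "n \<ge> 2" and cyc: "regular_q_cycle n p d" and c0: "p 1 1 1 \<noteq> 0"
begin

abbreviation "P \<equiv> trm n p"
abbreviation "D \<equiv> trm n d"

lemma mag: "regular_q_magma n p d" using cyc unfolding regular_q_cycle_def by blast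
lemma cp: "coalg_morph n p" using mag unfolding regular_q_magma_def by blast
lemma cd: "coalg_morph n d" using mag unfolding regular_q_magma_def by blast

lemma axs:
  assumes "i < n" "j < n" "h < n" "r < n"
  shows "(\<Sum>j1\<le>j. ap2 n p (mv p i j1) (mv d h (j - j1)) r) =
         (\<Sum>h1\<le>h. ap2 n p (mv p i (h - h1)) (mv p j h1) r)"
    "(\<Sum>j1\<le>j. ap2 n d (mv p i j1) (mv p h (j - j1)) r) =
      (\<Sum>h1\<le>h. ap2 n p (mv d i (h - h1)) (mv d j h1) r)"
    "(\<Sum>j1\<le>j. ap2 n d (mv d i j1) (mv d h (j - j1)) r) =
      (\<Sum>h1\<le>h. ap2 n d (mv d i (h - h1)) (mv p j h1) r)"
  using cyc assms unfolding regular_q_cycle_def by blast+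

lemma tr_eq: "k < n \<Longrightarrow> k' < n \<Longrightarrow> m k k' 1 = trm n m $ k' $ k"
  by (simp add: trm_nth)

lemma ax1:
  assumes "i < n" "j < n" "h < n"
  shows "(\<Sum>j1\<le>j. \<Sum>k<n. \<Sum>k'<n. (P ^ k) $ j1 $ i * (D ^ k') $ (j - j1) $ h * P $ k' $ k) =
         (\<Sum>h1\<le>h. \<Sum>k<n. \<Sum>k'<n. (P ^ k) $ (h - h1) $ i * (P ^ k') $ h1 $ j * P $ k' $ k)"
proof -
  have "(\<Sum>j1\<le>j. ap2 n p (mv p i j1) (mv d h (j - j1)) 1) =
         (\<Sum>h1\<le>h. ap2 n p (mv p i (h - h1)) (mv p j h1) 1)"
    using axs(1)[OF assms] n2 by simp
  moreover have "(\<Sum>j1\<le>j. ap2 n p (mv p i j1) (mv d h (j - j1)) 1) =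
     (\<Sum>j1\<le>j. \<Sum>k<n. \<Sum>k'<n. (P ^ k) $ j1 $ i * (D ^ k') $ (j - j1) $ h * P $ k' $ k)"
    using assms by (intro sum.cong refl) (auto simp: ap2_mv[OF cp cd] trm_nth intro!: sum.cong)
  moreover have "(\<Sum>h1\<le>h. ap2 n p (mv p i (h - h1)) (mv p j h1) 1) =
     (\<Sum>h1\<le>h. \<Sum>k<n. \<Sum>k'<n. (P ^ k) $ (h - h1) $ i * (P ^ k') $ h1 $ j * P $ k' $ k)"
    using assms by (intro sum.cong refl) (auto simp: ap2_mv[OF cp cp] trm_nth intro!: sum.cong)
  ultimately show ?thesis by simp
qed

lemma ax2:
  assumes "i < n" "j < n" "h < n"
  shows "(\<Sum>j1\<le>j. \<Sum>k<n. \<Sum>k'<n. (P ^ k) $ j1 $ i * (P ^ k') $ (j - j1) $ h * D $ k' $ k) =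
         (\<Sum>h1\<le>h. \<Sum>k<n. \<Sum>k'<n. (D ^ k) $ (h - h1) $ i * (D ^ k') $ h1 $ j * P $ k' $ k)"
proof -
  have "(\<Sum>j1\<le>j. ap2 n d (mv p i j1) (mv p h (j - j1)) 1) =
      (\<Sum>h1\<le>h. ap2 n p (mv d i (h - h1)) (mv d j h1) 1)"
    using axs(2)[OF assms] n2 by simp
  moreover have "(\<Sum>j1\<le>j. ap2 n d (mv p i j1) (mv p h (j - j1)) 1) =
     (\<Sum>j1\<le>j. \<Sum>k<n. \<Sum>k'<n. (P ^ k) $ j1 $ i * (P ^ k') $ (j - j1) $ h * D $ k' $ k)"
    using assms by (intro sum.cong refl) (auto simp: ap2_mv[OF cp cp] trm_nth intro!: sum.cong)
  moreover have "(\<Sum>h1\<le>h. ap2 n p (mv d i (h - h1)) (mv d j h1) 1) =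
     (\<Sum>h1\<le>h. \<Sum>k<n. \<Sum>k'<n. (D ^ k) $ (h - h1) $ i * (D ^ k') $ h1 $ j * P $ k' $ k)"
    using assms by (intro sum.cong refl) (auto simp: ap2_mv[OF cd cd] trm_nth intro!: sum.cong)
  ultimately show ?thesis by simp
qed

lemma ax3:
  assumes "i < n" "j < n" "h < n"
  shows "(\<Sum>j1\<le>j. \<Sum>k<n. \<Sum>k'<n. (D ^ k) $ j1 $ i * (D ^ k') $ (j - j1) $ h * D $ k' $ k) =
         (\<Sum>h1\<le>h. \<Sum>k<n. \<Sum>k'<n. (D ^ k) $ (h - h1) $ i * (P ^ k') $ h1 $ j * D $ k' $ k)"
proof -
  have "(\<Sum>j1\<le>j. ap2 n d (mv d i j1) (mv d h (j - j1)) 1) =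
      (\<Sum>h1\<le>h. ap2 n d (mv d i (h - h1)) (mv p j h1) 1)"
    using axs(3)[OF assms] n2 by simp
  moreover have "(\<Sum>j1\<le>j. ap2 n d (mv d i j1) (mv d h (j - j1)) 1) =
     (\<Sum>j1\<le>j. \<Sum>k<n. \<Sum>k'<n. (D ^ k) $ j1 $ i * (D ^ k') $ (j - j1) $ h * D $ k' $ k)"
    using assms by (intro sum.cong refl) (auto simp: ap2_mv[OF cd cd] trm_nth intro!: sum.cong)
  moreover have "(\<Sum>h1\<le>h. ap2 n d (mv d i (h - h1)) (mv p j h1) 1) =
     (\<Sum>h1\<le>h. \<Sum>k<n. \<Sum>k'<n. (D ^ k) $ (h - h1) $ i * (P ^ k') $ h1 $ j * D $ k' $ k)"
    using assms by (intro sum.cong refl) (auto simp: ap2_mv[OF cd cp] trm_nth intro!: sum.cong)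
  ultimately show ?thesis by simp
qed

lemma alpha: "P $ 0 $ 1 \<noteq> 0" "D $ 0 $ 1 \<noteq> 0"
  using regular_alpha[OF mag n2] n2 by (auto simp: trm_nth)

lemma P_row0: "P $ j $ 0 = 0"
  by (rule S1_generic[OF n2 coalg_pow_n_tr[OF cp _ _ n2] alpha(1)]) (auto simp: trm_nth)
lemma D_row0: "D $ j $ 0 = 0"
  by (rule S1_generic[OF n2 coalg_pow_n_tr[OF cd _ _ n2] alpha(2)]) (auto simp: trm_nth)

lemma c_P: "P $ 1 $ 1 \<noteq> 0" using c0 n2 by (simp add: trm_nth)

lemma P_col0: "P $ 0 = fps_X"
proof -
  have key: "P $ j $ 1 = (\<Sum>k<n. P $ k $ 1 * ((P $ 0) ^ k) $ j)" if j: "j < n" for j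
  proof -
    have L: "(\<Sum>j1\<le>j. \<Sum>k<n. \<Sum>k'<n. (P ^ k) $ j1 $ 1 * (D ^ k') $ (j - j1) $ 0 * P $ k' $ k)
        = P $ j $ 1 * P $ 0 $ 1"
    proof -
      have "(\<Sum>j1\<le>j. \<Sum>k<n. \<Sum>k'<n. (P ^ k) $ j1 $ 1 * (D ^ k') $ (j - j1) $ 0 * P $ k' $ k)
          = (\<Sum>j1\<le>j. if j1 = j then P $ j $ 1 * P $ 0 $ 1 else 0)"
      proof (intro sum.cong refl)
        fix j1 assume "j1 \<in> {..j}"
        then show "(\<Sum>k<n. \<Sum>k'<n. (P ^ k) $ j1 $ 1 * (D ^ k') $ (j - j1) $ 0 * P $ k' $ k) =
             (if j1 = j then P $ j $ 1 * P $ 0 $ 1 else 0)"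
          using n2 by (simp add: pow_col1[OF P_row0] pow_col1'[OF P_row0] pow_col0[OF D_row0] ifz_mult)
      qed
      also have "\<dots> = P $ j $ 1 * P $ 0 $ 1" by simp
      finally show ?thesis .
    qed
    have R: "(\<Sum>h1\<le>0. \<Sum>k<n. \<Sum>k'<n. (P ^ k) $ (0 - h1) $ 1 * (P ^ k') $ h1 $ j * P $ k' $ k)
        = P $ 0 $ 1 * (\<Sum>k<n. P $ k $ 1 * ((P $ 0) ^ k) $ j)"
      using n2 by (simp add: pow_col1[OF P_row0] pow_col1'[OF P_row0] ifz_mult sum_distrib_left mult_ac sum_if_out,
          simp add: pow_row0_col mult_ac)
    show ?thesis using ax1[of 1 j 0] L R j n2 alpha(1) by simp
  qed
  have "P $ 0 $ j = (if j = 1 then 1 else 0)" if "j < n" for j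
    using comp_id[of n "\<lambda>k. P $ k $ 1" "P $ 0", OF key _ c_P n2 that] P_row0 by simp
  then show ?thesis
    using n2 by (intro fps_ext) (auto simp: trm_nth)
qed

lemma P01: "P $ 0 $ 1 = 1" "P $ 0 $ Suc 0 = 1" using P_col0 by simp_all

lemma D_col0: "D $ 0 = fps_X"
proof -
  have key: "P $ h $ 1 = (\<Sum>k<n. P $ k $ 1 * ((D $ 0) ^ k) $ h)" if h: "h < n" for h
  proof -
    have L: "(\<Sum>j1\<le>0. \<Sum>k<n. \<Sum>k'<n. (P ^ k) $ j1 $ 1 * (D ^ k') $ (0 - j1) $ h * P $ k' $ k)
        = (\<Sum>k<n. P $ k $ 1 * ((D $ 0) ^ k) $ h)"
      using n2 by (simp add: pow_row0_col P_col0 fps_X_power_nth ifz_mult sum_if_out mult_ac)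
    have R: "(\<Sum>h1\<le>h. \<Sum>k<n. \<Sum>k'<n. (P ^ k) $ (h - h1) $ 1 * (P ^ k') $ h1 $ 0 * P $ k' $ k)
        = P $ h $ 1"
    proof -
      have "(\<Sum>h1\<le>h. \<Sum>k<n. \<Sum>k'<n. (P ^ k) $ (h - h1) $ 1 * (P ^ k') $ h1 $ 0 * P $ k' $ k)
          = (\<Sum>h1\<le>h. if h1 = 0 then P $ h $ 1 * P $ 0 $ 1 else 0)"
        using n2 by (intro sum.cong refl)
          (simp add: pow_col0[OF P_row0] pow_col1[OF P_row0] pow_col1'[OF P_row0] ifz_mult sum_if_out)
      then show ?thesis by (simp add: P01)
    qed
    show ?thesis using ax1[of 1 0 h] L R h n2 by simp
  qed
  have "D $ 0 $ j = (if j = 1 then 1 else 0)" if "j < n" for j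
    using comp_id[of n "\<lambda>k. P $ k $ 1" "D $ 0", OF key _ c_P n2 that] D_row0 by simp
  then show ?thesis
    using n2 by (intro fps_ext) (auto simp: trm_nth)
qed

end


lemma L_row1:
  assumes "(Q::'a::comm_ring_1 fps fps) $ 0 = fps_X" "h < n" "\<And>k. k \<ge> n \<Longrightarrow> F k = 0"
  shows "(\<Sum>k<n. (Q ^ k) $ 1 $ h * F k) = (fps_deriv (Abs_fps F) * Q $ 1) $ h"
proof -
  have "(\<Sum>k<n. (Q ^ k) $ 1 $ h * F k) = (\<Sum>k<n. if 0 < k \<and> k \<le> h + 1 then of_nat k * Q $ 1 $ (h + 1 - k) * F k else 0)"
    by (intro sum.cong refl) (subst pow_row1[OF assms(1)], simp)
  also have "\<dots> = (\<Sum>k\<in>{1..h+1}. of_nat k * Q $ 1 $ (h + 1 - k) * F k)"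
  proof -
    have "(\<Sum>k<n. if 0 < k \<and> k \<le> h + 1 then of_nat k * Q $ 1 $ (h + 1 - k) * F k else 0)
        = (\<Sum>k\<in>{..<n} \<inter> {1..h+1}. of_nat k * Q $ 1 $ (h + 1 - k) * F k)"
      unfolding sum.inter_restrict[OF finite_lessThan] by (intro sum.cong refl) auto
    also have "\<dots> = (\<Sum>k\<in>{1..h+1}. of_nat k * Q $ 1 $ (h + 1 - k) * F k)"
    proof (intro sum.mono_neutral_left ballI)
      fix k assume "k \<in> {1..h + 1} - {..<n} \<inter> {1..h + 1}"
      then have "k \<ge> n" by auto
      then show "of_nat k * Q $ 1 $ (h + 1 - k) * F k = 0" by (simp add: assms(3))
    qed auto
    finally show ?thesis .
  qed
  also have "\<dots> = (\<Sum>m=0..h. of_nat (m + 1) * Q $ 1 $ (h - m) * F (m + 1))"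
    by (rule sum.reindex_bij_witness[where i="\<lambda>m. m + 1" and j="\<lambda>k. k - 1"]) auto
  also have "\<dots> = (fps_deriv (Abs_fps F) * Q $ 1) $ h"
    by (simp add: fps_mult_nth mult_ac)
  finally show ?thesis .
qed

lemma L_row1':
  assumes "(Q::'a::comm_ring_1 fps fps) $ 0 = fps_X" "h < n" "\<And>k. k \<ge> n \<Longrightarrow> F k = 0"
  shows "(\<Sum>k<n. (Q ^ k) $ Suc 0 $ h * F k) = (fps_deriv (Abs_fps F) * Q $ 1) $ h"
  using L_row1[OF assms] by simp

lemma sum_le1: "(\<Sum>j\<le>(1::nat). F j) = F 0 + F 1"
  by (simp add: atMost_Suc ac_simps)

context qcyc
begin

definition "fP = Abs_fps (\<lambda>j. P $ j $ 1)"
definition "eD = Abs_fps (\<lambda>j. D $ j $ 1)"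
definition "hP = P $ 1"
definition "kD = D $ 1"
definition "c = P $ 1 $ 1"
definition "c' = D $ 1 $ 1"

lemma powP: "(P ^ k) $ b $ 1 = (if k = 1 then P $ b $ 1 else 0)"
    "(P ^ k) $ b $ Suc 0 = (if k = 1 then P $ b $ 1 else 0)"
    "(P ^ k) $ 0 $ h = (if h = k then 1 else 0)"
    "(P ^ k) $ b $ 0 = (if k = 0 then (if b = 0 then 1 else 0) else 0)"
  using pow_col1[OF P_row0] pow_X_col[OF P_col0] pow_col0[OF P_row0] by auto

lemma powD: "(D ^ k) $ b $ 1 = (if k = 1 then D $ b $ 1 else 0)"
    "(D ^ k) $ b $ Suc 0 = (if k = 1 then D $ b $ 1 else 0)"
    "(D ^ k) $ 0 $ h = (if h = k then 1 else 0)"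
    "(D ^ k) $ b $ 0 = (if k = 0 then (if b = 0 then 1 else 0) else 0)"
  using pow_col1[OF D_row0] pow_X_col[OF D_col0] pow_col0[OF D_row0] by auto

lemma D01: "D $ 0 $ 1 = 1" "D $ 0 $ Suc 0 = 1" using D_col0 by simp_all

lemma Pz: "k \<ge> n \<Longrightarrow> P $ k $ j = 0" "k \<ge> n \<Longrightarrow> D $ k $ j = 0"
  by (simp_all add: trm_nth)

lemma relC: "h < n \<Longrightarrow> (fps_deriv fP * kD) $ h + c * fP $ h = c * (fP * fP) $ h"
proof -
  assume h: "h < n"
  have "(\<Sum>j1\<le>1. \<Sum>k<n. \<Sum>k'<n. (P ^ k) $ j1 $ 1 * (D ^ k') $ (1 - j1) $ h * P $ k' $ k)
    = (\<Sum>k'<n. (D ^ k') $ 1 $ h * P $ k' $ 1) + P $ 1 $ 1 * P $ h $ 1"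
    using n2 h by (simp add: sum_le1 powP powD ifz_mult sum_if_out P01 sum_distrib_left mult_ac)
  also have "(\<Sum>k'<n. (D ^ k') $ 1 $ h * P $ k' $ 1) = (fps_deriv fP * kD) $ h"
    unfolding fP_def kD_def by (rule L_row1[OF D_col0 h]) (simp add: Pz)
  finally have L: "(\<Sum>j1\<le>1. \<Sum>k<n. \<Sum>k'<n. (P ^ k) $ j1 $ 1 * (D ^ k') $ (1 - j1) $ h * P $ k' $ k)
     = (fps_deriv fP * kD) $ h + c * fP $ h" by (simp add: c_def fP_def)
  have "(\<Sum>h1\<le>h. \<Sum>k<n. \<Sum>k'<n. (P ^ k) $ (h - h1) $ 1 * (P ^ k') $ h1 $ 1 * P $ k' $ k)
     = (\<Sum>h1\<le>h. P $ (h - h1) $ 1 * P $ h1 $ 1 * P $ 1 $ 1)"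
    using n2 by (simp add: powP ifz_mult sum_if_out mult_ac)
  also have "\<dots> = c * (fP * fP) $ h"
    by (simp add: fps_mult_nth c_def fP_def sum_distrib_left atLeast0AtMost mult_ac)
  finally show ?thesis using ax1[of 1 1 h] L n2 h by simp
qed

lemma relB: "j < n \<Longrightarrow> c' * (fP * fP) $ j = c' * fP $ j + (fps_deriv fP * kD) $ j"
proof -
  assume j: "j < n"
  have "(\<Sum>j1\<le>j. \<Sum>k<n. \<Sum>k'<n. (P ^ k) $ j1 $ 1 * (P ^ k') $ (j - j1) $ 1 * D $ k' $ k)
     = (\<Sum>j1\<le>j. P $ j1 $ 1 * P $ (j - j1) $ 1 * D $ 1 $ 1)"
    using n2 by (simp add: powP ifz_mult sum_if_out mult_ac)
  also have "\<dots> = c' * (fP * fP) $ j"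
    by (simp add: fps_mult_nth c'_def fP_def sum_distrib_left atLeast0AtMost mult_ac)
  finally have L: "(\<Sum>j1\<le>j. \<Sum>k<n. \<Sum>k'<n. (P ^ k) $ j1 $ 1 * (P ^ k') $ (j - j1) $ 1 * D $ k' $ k)
     = c' * (fP * fP) $ j" .
  have "(\<Sum>h1\<le>1. \<Sum>k<n. \<Sum>k'<n. (D ^ k) $ (1 - h1) $ 1 * (D ^ k') $ h1 $ j * P $ k' $ k)
    = D $ 1 $ 1 * P $ j $ 1 + (\<Sum>k'<n. (D ^ k') $ 1 $ j * P $ k' $ 1)"
    using n2 j by (simp add: sum_le1 powD ifz_mult sum_if_out D01 sum_distrib_left mult_ac)
  also have "(\<Sum>k'<n. (D ^ k') $ 1 $ j * P $ k' $ 1) = (fps_deriv fP * kD) $ j"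
    unfolding fP_def kD_def by (rule L_row1[OF D_col0 j]) (simp add: Pz)
  finally have R: "(\<Sum>h1\<le>1. \<Sum>k<n. \<Sum>k'<n. (D ^ k) $ (1 - h1) $ 1 * (D ^ k') $ h1 $ j * P $ k' $ k)
    = c' * fP $ j + (fps_deriv fP * kD) $ j" by (simp add: c'_def fP_def)
  show ?thesis using ax2[of 1 j 1] L R n2 j by simp
qed

lemma relD: "h < n \<Longrightarrow> (fps_deriv eD * kD) $ h + c' * eD $ h = c' * (eD * fP) $ h"
proof -
  assume h: "h < n"
  have "(\<Sum>j1\<le>1. \<Sum>k<n. \<Sum>k'<n. (D ^ k) $ j1 $ 1 * (D ^ k') $ (1 - j1) $ h * D $ k' $ k)
    = (\<Sum>k'<n. (D ^ k') $ 1 $ h * D $ k' $ 1) + D $ 1 $ 1 * D $ h $ 1"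
    using n2 h by (simp add: sum_le1 powD ifz_mult sum_if_out D01 sum_distrib_left mult_ac)
  also have "(\<Sum>k'<n. (D ^ k') $ 1 $ h * D $ k' $ 1) = (fps_deriv eD * kD) $ h"
    unfolding eD_def kD_def by (rule L_row1[OF D_col0 h]) (simp add: Pz)
  finally have L: "(\<Sum>j1\<le>1. \<Sum>k<n. \<Sum>k'<n. (D ^ k) $ j1 $ 1 * (D ^ k') $ (1 - j1) $ h * D $ k' $ k)
     = (fps_deriv eD * kD) $ h + c' * eD $ h" by (simp add: c'_def eD_def)
  have "(\<Sum>h1\<le>h. \<Sum>k<n. \<Sum>k'<n. (D ^ k) $ (h - h1) $ 1 * (P ^ k') $ h1 $ 1 * D $ k' $ k)
     = (\<Sum>h1\<le>h. D $ (h - h1) $ 1 * P $ h1 $ 1 * D $ 1 $ 1)"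
    using n2 by (simp add: powP powD ifz_mult sum_if_out mult_ac)
  also have "\<dots> = c' * (eD * fP) $ h"
  proof -
    have "(\<Sum>h1\<le>h. D $ (h - h1) $ 1 * P $ h1 $ 1 * D $ 1 $ 1) = (\<Sum>i\<le>h. D $ i $ 1 * P $ (h - i) $ 1 * D $ 1 $ 1)"
      by (rule sum.reindex_bij_witness[where i="\<lambda>m. h - m" and j="\<lambda>m. h - m"]) auto
    then show ?thesis
      by (simp add: fps_mult_nth c'_def fP_def eD_def sum_distrib_left atLeast0AtMost mult_ac)
  qed
  finally show ?thesis using ax3[of 1 1 h] L n2 h by simp
qed

lemma relA: "j < n \<Longrightarrow> c * (fP * eD) $ j = c * fP $ j + (fps_deriv fP * hP) $ j"
proof -
  assume j: "j < n"
  have "(\<Sum>j1\<le>j. \<Sum>k<n. \<Sum>k'<n. (P ^ k) $ j1 $ 1 * (D ^ k') $ (j - j1) $ 1 * P $ k' $ k)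
     = (\<Sum>j1\<le>j. P $ j1 $ 1 * D $ (j - j1) $ 1 * P $ 1 $ 1)"
    using n2 by (simp add: powP powD ifz_mult sum_if_out mult_ac)
  also have "\<dots> = c * (fP * eD) $ j"
  proof -
    have "(\<Sum>j1\<le>j. P $ j1 $ 1 * D $ (j - j1) $ 1 * P $ 1 $ 1) = (\<Sum>i\<le>j. P $ (j - i) $ 1 * D $ i $ 1 * P $ 1 $ 1)"
      by (rule sum.reindex_bij_witness[where i="\<lambda>m. j - m" and j="\<lambda>m. j - m"]) auto
    then show ?thesis
      by (simp add: fps_mult_nth c_def fP_def eD_def sum_distrib_left atLeast0AtMost mult_ac)
  qed
  finally have L: "(\<Sum>j1\<le>j. \<Sum>k<n. \<Sum>k'<n. (P ^ k) $ j1 $ 1 * (D ^ k') $ (j - j1) $ 1 * P $ k' $ k)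
     = c * (fP * eD) $ j" .
  have "(\<Sum>h1\<le>1. \<Sum>k<n. \<Sum>k'<n. (P ^ k) $ (1 - h1) $ 1 * (P ^ k') $ h1 $ j * P $ k' $ k)
    = P $ 1 $ 1 * P $ j $ 1 + (\<Sum>k'<n. (P ^ k') $ 1 $ j * P $ k' $ 1)"
    using n2 j by (simp add: sum_le1 powP ifz_mult sum_if_out P01 sum_distrib_left mult_ac)
  also have "(\<Sum>k'<n. (P ^ k') $ 1 $ j * P $ k' $ 1) = (fps_deriv fP * hP) $ j"
    unfolding fP_def hP_def by (rule L_row1[OF P_col0 j]) (simp add: Pz)
  finally have R: "(\<Sum>h1\<le>1. \<Sum>k<n. \<Sum>k'<n. (P ^ k) $ (1 - h1) $ 1 * (P ^ k') $ h1 $ j * P $ k' $ k)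
    = c * fP $ j + (fps_deriv fP * hP) $ j" by (simp add: c_def fP_def)
  show ?thesis using ax1[of 1 j 1] L R n2 j by simp
qed

end


definition eqm :: "nat \<Rightarrow> 'a::comm_ring_1 fps \<Rightarrow> 'a fps \<Rightarrow> bool" where
  "eqm n A B \<longleftrightarrow> (\<forall>j<n. A $ j = B $ j)"

lemma eqm_refl[simp]: "eqm n A A" by (simp add: eqm_def)

lemma eqm_mult:
  assumes "eqm n A A'" "eqm n B B'"
  shows "eqm n (A * B) (A' * B')"
  using assms unfolding eqm_def by (auto simp: fps_mult_nth intro!: sum.cong)

lemma eqm_cancel:
  fixes A B B' :: "'a::field fps"
  assumes "A $ 0 \<noteq> 0" "eqm n (A * B) (A * B')"
  shows "eqm n B B'"
proof -
  have "eqm n (inverse A * (A * B)) (inverse A * (A * B'))"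
    by (rule eqm_mult[OF eqm_refl assms(2)])
  moreover have "inverse A * (A * B) = B" "inverse A * (A * B') = B'"
    using assms(1) by (simp_all add: mult.assoc[symmetric] inverse_mult_eq_1)
  ultimately show ?thesis by simp
qed

lemma eqm_X:
  assumes "eqm n (fps_X * A) 0"
  shows "eqm (n - 1) A 0"
  using assms unfolding eqm_def
proof (intro allI impI)
  fix j assume a: "\<forall>j<n. (fps_X * A) $ j = 0 $ j" and j: "j < n - 1"
  then have "(fps_X * A) $ Suc j = 0" using a[rule_format, of "Suc j"] by simp
  then show "A $ j = 0 $ j" by (simp add: fps_X_mult_nth)
qed

lemma ring_id: "(a::'b::comm_ring_1) * (c * (f * f - f)) - b * (c * (e * f - e)) = c * ((f - 1) * (a * f - b * e))"
  by (simp add: algebra_simps)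

lemma ring_id2: "(f::'b::comm_ring_1) * i = 1 \<Longrightarrow> e * (- (b * i ^ 2)) + a * i = (a * f - b * e) * i ^ 2"
proof -
  assume fi: "f * i = 1"
  have "(a * f - b * e) * i ^ 2 = a * (f * i) * i - b * e * i ^ 2" by (simp add: algebra_simps power2_eq_square)
  then show ?thesis using fi by (simp add: algebra_simps)
qed

lemma ef_eq:
  fixes e f k :: "'a::field_char_0 fps" and c :: 'a
  assumes C: "eqm n (fps_deriv f * k) (fps_const c * (f * f - f))"
    and D: "eqm n (fps_deriv e * k) (fps_const c * (e * f - e))"
    and c: "c \<noteq> 0" and f0: "f $ 0 = 1" and e0: "e $ 0 = 1" and f1: "f $ 1 = c"
  shows "eqm n e f"
proof -
  have f1': "f $ Suc 0 = c" using f1 by simp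
  define W where "W = fps_deriv e * f - fps_deriv f * e"
  have h1: "eqm n (fps_deriv e * (fps_deriv f * k)) (fps_deriv e * (fps_const c * (f * f - f)))"
    by (rule eqm_mult[OF eqm_refl C])
  have h2: "eqm n (fps_deriv f * (fps_deriv e * k)) (fps_deriv f * (fps_const c * (e * f - e)))"
    by (rule eqm_mult[OF eqm_refl D])
  have "eqm n (fps_const c * ((f - 1) * W)) (fps_const c * 0)"
    unfolding eqm_def
  proof (intro allI impI)
    fix j assume j: "j < n"
    have eqL: "fps_deriv e * (fps_deriv f * k) = fps_deriv f * (fps_deriv e * k)"
      by (rule mult.left_commute)
    have "(fps_deriv e * (fps_const c * (f * f - f))) $ j = (fps_deriv f * (fps_const c * (e * f - e))) $ j"
      using h1 h2 j unfolding eqm_def eqL by simp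
    moreover have "fps_deriv e * (fps_const c * (f * f - f)) - fps_deriv f * (fps_const c * (e * f - e))
        = fps_const c * ((f - 1) * W)"
      unfolding W_def by (rule ring_id)
    ultimately have "(fps_const c * ((f - 1) * W)) $ j = 0"
      by (metis fps_sub_nth diff_self)
    then show "(fps_const c * ((f - 1) * W)) $ j = (fps_const c * 0) $ j" by simp
  qed
  then have fW: "eqm n ((f - 1) * W) 0"
    using eqm_cancel[of "fps_const c" n "(f - 1) * W" 0] c by simp
  define U where "U = fps_shift 1 (f - 1)"
  have fU: "f - 1 = fps_X * U"
    by (intro fps_ext) (simp add: U_def fps_X_mult_nth f0)
  have "eqm n (fps_X * (U * W)) 0"
    using fW by (simp add: fU mult.assoc)
  then have "eqm (n - 1) (U * W) (U * 0)" using eqm_X by simp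
  then have W0: "eqm (n - 1) W 0"
    by (rule eqm_cancel[rotated]) (simp add: U_def f1' c)
  define q where "q = e * inverse f"
  have fi: "f * inverse f = 1" using f0 by (simp add: inverse_mult_eq_1')
  have "fps_deriv q = e * (- (fps_deriv f * (inverse f) ^ 2)) + fps_deriv e * inverse f"
    using f0 by (simp add: q_def fps_inverse_deriv)
  also have "\<dots> = W * (inverse f) ^ 2" unfolding W_def by (rule ring_id2[OF fi])
  finally have "fps_deriv q = W * (inverse f) ^ 2" .
  then have dq: "eqm (n - 1) (fps_deriv q) 0"
    using eqm_mult[OF W0 eqm_refl, of "(inverse f)^2"] by simp
  have q1: "eqm n q 1"
    unfolding eqm_def
  proof (intro allI impI)
    fix j assume j: "j < n"
    show "q $ j = 1 $ j"
    proof (cases j)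
      case 0 then show ?thesis using f0 e0 by (simp add: q_def)
    next
      case (Suc j')
      then have "fps_deriv q $ j' = 0" using dq j unfolding eqm_def by simp
      then have "of_nat (Suc j') * q $ Suc j' = 0" by (simp add: fps_deriv_nth)
      then show ?thesis using Suc by (simp del: of_nat_Suc)
    qed
  qed
  have "eqm n (q * f) (1 * f)" by (rule eqm_mult[OF q1 eqm_refl])
  moreover have "q * f = e" using fi by (simp add: q_def mult.assoc mult.commute)
  ultimately show ?thesis by simp
qed


context qcyc
begin

lemma fP0: "fP $ 0 = 1" by (simp add: fP_def P01)
lemma fP1: "fP $ 1 = c" by (simp add: fP_def c_def)
lemma fP1': "fP $ Suc 0 = c" by (simp add: fP_def c_def)
lemma eD0: "eD $ 0 = 1" by (simp add: eD_def D01)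
lemma c_nz: "c \<noteq> 0" using c_P by (simp add: c_def)

lemma c_eq: "c' = c"
proof -
  have S: "(fP * fP) $ 1 = 2 * c"
    using fP0 fP1 by (simp add: fps_mult_nth numeral_2_eq_2 atLeast0AtMost atMost_Suc)
  have e1: "(fps_deriv fP * kD) $ 1 + c * fP $ 1 = c * (fP * fP) $ 1" using relC[of 1] n2 by simp
  have e2: "c' * (fP * fP) $ 1 = c' * fP $ 1 + (fps_deriv fP * kD) $ 1" using relB[of 1] n2 by simp
  have "c * (fP * fP) $ 1 - c * fP $ 1 = c' * (fP * fP) $ 1 - c' * fP $ 1"
    using e1 e2 by (simp add: algebra_simps)
  then have "c * (2 * c) - c * c = c' * (2 * c) - c' * c" unfolding S fP1 .
  then have "(c - c') * c = 0" by (simp add: algebra_simps)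
  then show ?thesis using c_nz by simp
qed

lemma rel_sub: "a + b = (z::'a) \<Longrightarrow> a = z - b" by (simp add: algebra_simps)

lemma eD_fP: "eD = fP"
proof -
  have "eqm n eD fP"
  proof (rule ef_eq[OF _ _ c_nz fP0 eD0 fP1])
    show "eqm n (fps_deriv fP * kD) (fps_const c * (fP * fP - fP))"
      unfolding eqm_def using rel_sub[OF relC] by (simp add: right_diff_distrib)
    show "eqm n (fps_deriv eD * kD) (fps_const c * (eD * fP - eD))"
      unfolding eqm_def using rel_sub[OF relD] c_eq by (simp add: right_diff_distrib)
  qed
  moreover have "eD $ j = 0" "fP $ j = 0" if "j \<ge> n" for j
    using that by (simp_all add: eD_def fP_def trm_nth)
  ultimately show ?thesis unfolding eqm_def by (intro fps_ext) (metis not_less)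
qed

lemma hP_kD: "hP = kD"
proof -
  have "eqm n (fps_deriv fP * hP) (fps_deriv fP * kD)"
    unfolding eqm_def
  proof (intro allI impI)
    fix j assume j: "j < n"
    have "(fps_deriv fP * hP) $ j = c * (fP * fP) $ j - c * fP $ j" using relA[OF j] eD_fP by simp
    also have "\<dots> = (fps_deriv fP * kD) $ j" using rel_sub[OF relC[OF j]] by simp
    finally show "(fps_deriv fP * hP) $ j = (fps_deriv fP * kD) $ j" .
  qed
  then have "eqm n hP kD" by (rule eqm_cancel[rotated]) (simp add: fP1' c_nz)
  moreover have "hP $ j = 0" "kD $ j = 0" if "j \<ge> n" for j
    using that by (simp_all add: hP_def kD_def trm_nth)
  ultimately show ?thesis unfolding eqm_def by (intro fps_ext) (metis not_less)
qed

end


definition colf :: "'a::comm_ring_1 fps fps \<Rightarrow> nat \<Rightarrow> 'a fps" where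
  "colf Q i = Abs_fps (\<lambda>k. Q $ k $ i)"

definition Rrel :: "nat \<Rightarrow> 'a::comm_ring_1 fps fps \<Rightarrow> 'a fps \<Rightarrow> 'a fps \<Rightarrow> bool" where
  "Rrel n Q f g \<longleftrightarrow> (\<forall>i<n. \<forall>h<n.
     (fps_deriv (colf Q i) * g) $ h + (fps_deriv (Q $ h) * g) $ i =
     (\<Sum>h1\<le>h. \<Sum>k<n. (Q ^ k) $ (h - h1) $ i * f $ h1 * g $ k))"

lemma sum_single:
  assumes "finite A" "x \<in> A" "\<And>y. y \<in> A \<Longrightarrow> y \<noteq> x \<Longrightarrow> g y = 0"
  shows "sum g A = (g x :: 'a::comm_monoid_add)"
proof -
  have "sum g A = g x + sum g (A - {x})" using assms(1,2) by (rule sum.remove)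
  also have "sum g (A - {x}) = 0" using assms(3) by (intro sum.neutral) auto
  finally show ?thesis by simp
qed

lemma deriv_lead:
  fixes E g :: "'a::comm_ring_1 fps"
  assumes "\<And>m. m < h \<Longrightarrow> E $ m = 0" "g $ 0 = 0" "h \<ge> 1"
  shows "(fps_deriv E * g) $ h = of_nat h * E $ h * g $ 1"
proof -
  have "(fps_deriv E * g) $ h = (\<Sum>m=0..h. (fps_deriv E) $ m * g $ (h - m))"
    by (simp add: fps_mult_nth)
  also have "\<dots> = (fps_deriv E) $ (h - 1) * g $ (h - (h - 1))"
  proof (rule sum_single)
    fix m assume m: "m \<in> {0..h}" "m \<noteq> h - 1"
    show "fps_deriv E $ m * g $ (h - m) = 0"
    proof (cases "m = h")
      case True then show ?thesis using assms(2) by simp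
    next
      case False then have "Suc m < h" using m assms(3) by auto
      then show ?thesis using assms(1) by (simp add: fps_deriv_nth)
    qed
  qed (use assms(3) in auto)
  also have "\<dots> = of_nat h * E $ h * g $ 1"
    using assms(3) by (simp add: fps_deriv_nth)
  finally show ?thesis .
qed

lemma pow_agree_gen:
  fixes Q Q' :: "'a::comm_ring_1 fps fps"
  assumes r0: "\<And>j. Q $ j $ 0 = 0" "\<And>j. Q' $ j $ 0 = 0"
    and ag: "\<And>a b. a < i \<Longrightarrow> b \<le> h \<Longrightarrow> Q $ b $ a = Q' $ b $ a"
  shows "k \<ge> 1 \<Longrightarrow> a \<le> i \<Longrightarrow> b \<le> h \<Longrightarrow> (a < i \<or> k \<ge> 2) \<Longrightarrow> (Q ^ k) $ b $ a = (Q' ^ k) $ b $ a"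
proof (induction k arbitrary: a b)
  case 0 then show ?case by simp
next
  case (Suc k)
  show ?case
  proof (cases "k = 0")
    case True then show ?thesis using Suc.prems ag by auto
  next
    case False
    show ?thesis unfolding power_Suc fps2_mult_nth
    proof (intro sum.cong refl)
      fix b1 a1 assume b1: "b1 \<in> {..b}" and a1: "a1 \<in> {..a}"
      show "Q $ b1 $ a1 * (Q ^ k) $ (b - b1) $ (a - a1) = Q' $ b1 $ a1 * (Q' ^ k) $ (b - b1) $ (a - a1)"
      proof (cases "a1 = 0")
        case True then show ?thesis using r0 by simp
      next
        case a10: False
        have lt: "a - a1 < i" using a1 a10 Suc.prems by auto
        have pk: "(Q ^ k) $ (b - b1) $ (a - a1) = (Q' ^ k) $ (b - b1) $ (a - a1)"
          using Suc.IH[of "a - a1" "b - b1"] lt Suc.prems False by auto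
        show ?thesis
        proof (cases "a1 < i")
          case True then show ?thesis using ag[of a1 b1] b1 Suc.prems pk by auto
        next
          case False
          then have "a1 = a" "a = i" using a1 Suc.prems by auto
          then show ?thesis using pow_row0[OF r0(1), of 0 k] pow_row0[OF r0(2), of 0 k] \<open>k \<noteq> 0\<close> by simp
        qed
      qed
    qed
  qed
qed

lemma R_unique:
  fixes Q Q' :: "'a::field_char_0 fps fps"
  assumes R: "Rrel n Q f g" and R': "Rrel n Q' f g"
    and r0: "\<And>j. Q $ j $ 0 = 0" "\<And>j. Q' $ j $ 0 = 0"
    and c0: "Q $ 0 = fps_X" "Q' $ 0 = fps_X"
    and g0: "g $ 0 = 0" and g1: "g $ 1 \<noteq> 0" and f0: "f $ 0 = 1"
  shows "i < n \<Longrightarrow> h < n \<Longrightarrow> Q $ h $ i = Q' $ h $ i"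
proof (induction i arbitrary: h rule: less_induct)
  case (less i)
  note IHi = less.IH
  show ?case using less.prems
  proof (induction h rule: less_induct)
    case (less h)
    note IHh = less.IH
    show ?case
    proof (cases "i = 0 \<or> h = 0")
      case True then show ?thesis using r0 c0 by auto
    next
      case False
      then have i1: "i \<ge> 1" and h1: "h \<ge> 1" by auto
      have i: "i < n" and h: "h < n" using less.prems by auto
      define \<Delta> where "\<Delta> = Q $ h $ i - Q' $ h $ i"
      have E1: "(fps_deriv (colf Q i) * g) $ h - (fps_deriv (colf Q' i) * g) $ h = of_nat h * \<Delta> * g $ 1"
      proof -
        have "(fps_deriv (colf Q i) * g) $ h - (fps_deriv (colf Q' i) * g) $ h
            = (fps_deriv (colf Q i - colf Q' i) * g) $ h"
          by (simp add: algebra_simps)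
        also have "\<dots> = of_nat h * (colf Q i - colf Q' i) $ h * g $ 1"
          by (rule deriv_lead[OF _ g0 h1]) (use IHh h i in \<open>auto simp: colf_def\<close>)
        finally show ?thesis by (simp add: colf_def \<Delta>_def)
      qed
      have E2: "(fps_deriv (Q $ h) * g) $ i - (fps_deriv (Q' $ h) * g) $ i = of_nat i * \<Delta> * g $ 1"
      proof -
        have "(fps_deriv (Q $ h) * g) $ i - (fps_deriv (Q' $ h) * g) $ i
            = (fps_deriv (Q $ h - Q' $ h) * g) $ i"
          by (simp add: algebra_simps)
        also have "\<dots> = of_nat i * (Q $ h - Q' $ h) $ i * g $ 1"
          by (rule deriv_lead[OF _ g0 i1]) (use IHi h i in auto)
        finally show ?thesis by (simp add: \<Delta>_def)
      qed
      have E3: "(\<Sum>h1\<le>h. \<Sum>k<n. (Q ^ k) $ (h - h1) $ i * f $ h1 * g $ k)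
         - (\<Sum>h1\<le>h. \<Sum>k<n. (Q' ^ k) $ (h - h1) $ i * f $ h1 * g $ k) = \<Delta> * g $ 1"
      proof -
        have agr: "\<And>a b. a < i \<Longrightarrow> b \<le> h \<Longrightarrow> Q $ b $ a = Q' $ b $ a"
          using IHi h i by (meson le_less_trans order.strict_trans)
        have "(\<Sum>h1\<le>h. \<Sum>k<n. (Q ^ k) $ (h - h1) $ i * f $ h1 * g $ k)
         - (\<Sum>h1\<le>h. \<Sum>k<n. (Q' ^ k) $ (h - h1) $ i * f $ h1 * g $ k)
         = (\<Sum>h1\<le>h. \<Sum>k<n. ((Q ^ k) $ (h - h1) $ i - (Q' ^ k) $ (h - h1) $ i) * f $ h1 * g $ k)"
          by (simp add: sum_subtractf algebra_simps)
        also have "\<dots> = (\<Sum>k<n. ((Q ^ k) $ (h - 0) $ i - (Q' ^ k) $ (h - 0) $ i) * f $ 0 * g $ k)"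
        proof (rule sum_single)
          fix h1 assume h1: "h1 \<in> {..h}" "h1 \<noteq> 0"
          show "(\<Sum>k<n. ((Q ^ k) $ (h - h1) $ i - (Q' ^ k) $ (h - h1) $ i) * f $ h1 * g $ k) = 0"
          proof (intro sum.neutral ballI)
            fix k assume "k \<in> {..<n}"
            consider "k = 0" | "k = 1" | "k \<ge> 2" by linarith
            then show "((Q ^ k) $ (h - h1) $ i - (Q' ^ k) $ (h - h1) $ i) * f $ h1 * g $ k = 0"
            proof cases
              case 1 then show ?thesis using g0 by simp
            next
              case 2 then show ?thesis using IHh[of "h - h1"] h1 h i by auto
            next
              case 3 then show ?thesis
                using pow_agree_gen[OF r0 agr, where k=k and a=i and b="h - h1"] by auto
            qed
          qed
        qed auto
        also have "\<dots> = ((Q ^ 1) $ (h - 0) $ i - (Q' ^ 1) $ (h - 0) $ i) * f $ 0 * g $ 1"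
        proof (rule sum_single)
          fix k assume "k \<in> {..<n}" "k \<noteq> 1"
          then consider "k = 0" | "k \<ge> 2" by linarith
          then show "((Q ^ k) $ (h - 0) $ i - (Q' ^ k) $ (h - 0) $ i) * f $ 0 * g $ k = 0"
          proof cases
            case 1 then show ?thesis using g0 by simp
          next
            case 2 then show ?thesis using pow_agree_gen[OF r0 agr, where k=k and a=i and b=h] by auto
          qed
        qed (use h1 h in auto)
        also have "\<dots> = \<Delta> * g $ 1" by (simp add: \<Delta>_def f0)
        finally show ?thesis .
      qed
      have "(fps_deriv (colf Q i) * g) $ h + (fps_deriv (Q $ h) * g) $ i =
            (\<Sum>h1\<le>h. \<Sum>k<n. (Q ^ k) $ (h - h1) $ i * f $ h1 * g $ k)"
        using R i h unfolding Rrel_def by blast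
      moreover have "(fps_deriv (colf Q' i) * g) $ h + (fps_deriv (Q' $ h) * g) $ i =
            (\<Sum>h1\<le>h. \<Sum>k<n. (Q' ^ k) $ (h - h1) $ i * f $ h1 * g $ k)"
        using R' i h unfolding Rrel_def by blast
      ultimately have "((fps_deriv (colf Q i) * g) $ h - (fps_deriv (colf Q' i) * g) $ h)
          + ((fps_deriv (Q $ h) * g) $ i - (fps_deriv (Q' $ h) * g) $ i) =
          (\<Sum>h1\<le>h. \<Sum>k<n. (Q ^ k) $ (h - h1) $ i * f $ h1 * g $ k)
         - (\<Sum>h1\<le>h. \<Sum>k<n. (Q' ^ k) $ (h - h1) $ i * f $ h1 * g $ k)"
        by (simp add: algebra_simps)
      then have "of_nat h * \<Delta> * g $ 1 + of_nat i * \<Delta> * g $ 1 = \<Delta> * g $ 1"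
        unfolding E1 E2 E3 .
      then have "(of_nat (h + i - 1) :: 'a) * \<Delta> * g $ 1 = 0"
        using i1 by (simp add: algebra_simps of_nat_diff)
      moreover have "(of_nat (h + i - 1) :: 'a) \<noteq> 0"
      proof -
        have "h + i - 1 = Suc (h + i - 2)" using i1 h1 by simp
        then show ?thesis by (simp only:) (rule of_nat_neq_0)
      qed
      ultimately have "\<Delta> = 0" using g1 by simp
      then show ?thesis by (simp add: \<Delta>_def)
    qed
  qed
qed

context qcyc
begin

lemma R_P: "Rrel n P fP hP"
  unfolding Rrel_def
proof (intro allI impI)
  fix i h assume i: "i < n" and h: "h < n"
  have "(\<Sum>j1\<le>1. \<Sum>k<n. \<Sum>k'<n. (P ^ k) $ j1 $ i * (D ^ k') $ (1 - j1) $ h * P $ k' $ k)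
    = (\<Sum>k'<n. (D ^ k') $ 1 $ h * P $ k' $ i) + (\<Sum>k<n. (P ^ k) $ 1 $ i * P $ h $ k)"
    using n2 h i by (simp add: sum_le1 powP powD ifz_mult sum_if_out sum_distrib_left mult_ac)
  also have "(\<Sum>k'<n. (D ^ k') $ 1 $ h * P $ k' $ i) = (fps_deriv (colf P i) * kD) $ h"
    unfolding colf_def kD_def by (rule L_row1[OF D_col0 h]) (simp add: Pz)
  also have "(\<Sum>k<n. (P ^ k) $ 1 $ i * P $ h $ k) = (fps_deriv (P $ h) * hP) $ i"
  proof -
    have "Abs_fps (\<lambda>k. P $ h $ k) = P $ h" by (simp add: fps_ext)
    then show ?thesis
      unfolding hP_def using L_row1[OF P_col0 i, of "\<lambda>k. P $ h $ k"] by (simp add: trm_nth)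
  qed
  finally have L: "(\<Sum>j1\<le>1. \<Sum>k<n. \<Sum>k'<n. (P ^ k) $ j1 $ i * (D ^ k') $ (1 - j1) $ h * P $ k' $ k)
    = (fps_deriv (colf P i) * hP) $ h + (fps_deriv (P $ h) * hP) $ i" by (simp add: hP_kD)
  have R: "(\<Sum>h1\<le>h. \<Sum>k<n. \<Sum>k'<n. (P ^ k) $ (h - h1) $ i * (P ^ k') $ h1 $ 1 * P $ k' $ k)
     = (\<Sum>h1\<le>h. \<Sum>k<n. (P ^ k) $ (h - h1) $ i * fP $ h1 * hP $ k)"
    using n2 by (simp add: powP ifz_mult sum_if_out mult_ac fP_def hP_def)
  show "(fps_deriv (colf P i) * hP) $ h + (fps_deriv (P $ h) * hP) $ i =
     (\<Sum>h1\<le>h. \<Sum>k<n. (P ^ k) $ (h - h1) $ i * fP $ h1 * hP $ k)"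
    using ax1[OF i _ h, of 1] L R n2 by simp
qed

lemma R_D: "Rrel n D fP hP"
  unfolding Rrel_def
proof (intro allI impI)
  fix i h assume i: "i < n" and h: "h < n"
  have "(\<Sum>j1\<le>1. \<Sum>k<n. \<Sum>k'<n. (D ^ k) $ j1 $ i * (D ^ k') $ (1 - j1) $ h * D $ k' $ k)
    = (\<Sum>k'<n. (D ^ k') $ 1 $ h * D $ k' $ i) + (\<Sum>k<n. (D ^ k) $ 1 $ i * D $ h $ k)"
    using n2 h i by (simp add: sum_le1 powD ifz_mult sum_if_out sum_distrib_left mult_ac)
  also have "(\<Sum>k'<n. (D ^ k') $ 1 $ h * D $ k' $ i) = (fps_deriv (colf D i) * kD) $ h"
    unfolding colf_def kD_def by (rule L_row1[OF D_col0 h]) (simp add: Pz)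
  also have "(\<Sum>k<n. (D ^ k) $ 1 $ i * D $ h $ k) = (fps_deriv (D $ h) * kD) $ i"
  proof -
    have "Abs_fps (\<lambda>k. D $ h $ k) = D $ h" by (simp add: fps_ext)
    then show ?thesis
      unfolding kD_def using L_row1[OF D_col0 i, of "\<lambda>k. D $ h $ k"] by (simp add: trm_nth)
  qed
  finally have L: "(\<Sum>j1\<le>1. \<Sum>k<n. \<Sum>k'<n. (D ^ k) $ j1 $ i * (D ^ k') $ (1 - j1) $ h * D $ k' $ k)
    = (fps_deriv (colf D i) * hP) $ h + (fps_deriv (D $ h) * hP) $ i" by (simp add: hP_kD)
  have R: "(\<Sum>h1\<le>h. \<Sum>k<n. \<Sum>k'<n. (D ^ k) $ (h - h1) $ i * (P ^ k') $ h1 $ 1 * D $ k' $ k)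
     = (\<Sum>h1\<le>h. \<Sum>k<n. (D ^ k) $ (h - h1) $ i * fP $ h1 * hP $ k)"
    using n2 by (simp add: powP ifz_mult sum_if_out mult_ac fP_def hP_kD kD_def)
  show "(fps_deriv (colf D i) * hP) $ h + (fps_deriv (D $ h) * hP) $ i =
     (\<Sum>h1\<le>h. \<Sum>k<n. (D ^ k) $ (h - h1) $ i * fP $ h1 * hP $ k)"
    using ax3[OF i _ h, of 1] L R n2 by simp
qed


lemma hP0: "hP $ 0 = 0" by (simp add: hP_def P_row0)
lemma hP1: "hP $ 1 \<noteq> 0" using c_nz by (simp add: hP_def c_def)

lemma D_eq_P: "D = P"
proof -
  have "D $ h $ i = P $ h $ i" if "i < n" "h < n" for i h
    by (rule R_unique[OF R_D R_P D_row0 P_row0 D_col0 P_col0 hP0 hP1 fP0 that])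
  then show ?thesis
    by (intro fps_ext) (auto simp: trm_nth)
qed

lemma d_eq_p: "i < n \<Longrightarrow> j < n \<Longrightarrow> k < n \<Longrightarrow> d i j k = p i j k"
  using coalg_pow_tr[OF cd, of k i j] coalg_pow_tr[OF cp, of k i j] D_eq_P by simp

end


lemma lift_y_nth[simp]: "lift_y F $ v = fps_const (F $ v)" by (simp add: lift_y_def)
lemma deriv_x_nth[simp]: "deriv_x G $ v = fps_deriv (G $ v)" by (simp add: deriv_x_def)

lemma deriv_x_add[simp]: "deriv_x (A + B) = deriv_x A + deriv_x B"
  by (intro fps_ext) simp
lemma deriv_x_diff[simp]: "deriv_x (A - B) = deriv_x A - deriv_x (B :: 'a::comm_ring_1 fps fps)"
  by (intro fps_ext) simp
lemma deriv_x_mult: "deriv_x (A * B) = deriv_x A * B + A * deriv_x (B :: 'a::comm_ring_1 fps fps)"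
  by (intro fps_ext) (simp add: fps_mult_nth fps_deriv_sum sum.distrib add.commute)
lemma deriv_x_const[simp]: "deriv_x (fps_const c) = fps_const (fps_deriv (c :: 'a::comm_ring_1 fps))"
  by (intro fps_ext) auto
lemma fps_const_sum: "fps_const (sum f A) = (\<Sum>x\<in>A. fps_const (f x :: 'a::comm_ring_1))"
  by (induction A rule: infinite_finite_induct) (auto simp flip: fps_const_add)
lemma deriv_x_lift[simp]: "deriv_x (lift_y F) = 0"
  by (intro fps_ext) simp
lemma fps_deriv_lift[simp]: "fps_deriv (lift_y F) = lift_y (fps_deriv (F :: 'a::comm_ring_1 fps))"
  by (intro fps_ext) (simp add: fps_of_nat[symmetric])
lemma deriv_x_comm: "fps_deriv (deriv_x G) = deriv_x (fps_deriv (G :: 'a::comm_ring_1 fps fps))"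
  by (intro fps_ext) (simp add: fps_of_nat[symmetric])
lemma lift_y_mult: "lift_y (A * B) = lift_y A * lift_y (B :: 'a::comm_ring_1 fps)"
  by (intro fps_ext) (simp add: fps_mult_nth fps_const_sum[symmetric] fps_const_mult)
lemma lift_y_one[simp]: "lift_y 1 = 1"
  by (intro fps_ext) (simp add: fps_one_nth)
lemma lift_y_diff: "lift_y (A - B) = lift_y A - lift_y (B :: 'a::comm_ring_1 fps)"
  by (intro fps_ext) simp
lemma deriv_x_power: "deriv_x (A ^ Suc m) = of_nat (Suc m) * A ^ m * deriv_x (A :: 'a::comm_ring_1 fps fps)"
  by (induction m) (simp_all add: deriv_x_mult algebra_simps)


definition pde_ok :: "nat \<Rightarrow> 'a::comm_ring_1 fps \<Rightarrow> 'a fps \<Rightarrow> 'a fps fps \<Rightarrow> bool" where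
  "pde_ok N f g W \<longleftrightarrow> (\<forall>v. \<forall>u<N. (lift_y f * fps_deriv W) $ v $ u =
      (fps_const g * lift_y (fps_deriv f) * deriv_x W) $ v $ u)"

lemma g_deriv_zero:
  fixes g A :: "'a::comm_ring_1 fps"
  assumes "g $ 0 = 0" "\<And>u. u < N \<Longrightarrow> A $ u = 0" "u < N"
  shows "(g * fps_deriv A) $ u = 0"
  unfolding fps_mult_nth
proof (intro sum.neutral ballI)
  fix t assume "t \<in> {0..u}"
  then show "g $ t * fps_deriv A $ (u - t) = 0"
    using assms by (cases t) (auto simp: fps_deriv_nth)
qed

lemma of_nat_mult_nth: "(of_nat m * (B :: 'a::comm_ring_1 fps)) $ u = of_nat m * B $ u"
  by (metis fps_mult_left_const_nth fps_of_nat)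

lemma lhs_coeff: "(lift_y f * fps_deriv W) $ v $ u =
    (\<Sum>i=0..v. f $ i * (of_nat (v - i + 1) * W $ (v - i + 1) $ u))"
proof -
  have "(lift_y f * fps_deriv W) $ v = (\<Sum>i=0..v. fps_const (f $ i) * (of_nat (v - i + 1) * W $ (v - i + 1)))"
    unfolding fps_mult_nth lift_y_nth fps_deriv_nth ..
  then show ?thesis by (simp only: fps_sum_nth fps_mult_left_const_nth of_nat_mult_nth)
qed

lemma rhs_coeff: "(fps_const g * lift_y f' * deriv_x W) $ v $ u =
    (\<Sum>i=0..v. f' $ i * (g * fps_deriv (W $ (v - i))) $ u)"
proof -
  have "(fps_const g * lift_y f' * deriv_x W) $ v = g * (lift_y f' * deriv_x W) $ v"
    by (simp only: mult.assoc fps_mult_left_const_nth)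
  also have "(lift_y f' * deriv_x W) $ v = (\<Sum>i=0..v. fps_const (f' $ i) * fps_deriv (W $ (v - i)))"
    unfolding fps_mult_nth lift_y_nth deriv_x_nth ..
  also have "g * \<dots> = (\<Sum>i=0..v. fps_const (f' $ i) * (g * fps_deriv (W $ (v - i))))"
    by (simp add: sum_distrib_left mult_ac)
  finally show ?thesis by (simp only: fps_sum_nth fps_mult_left_const_nth)
qed

lemma pde_unique_zero:
  fixes f g :: "'a::field_char_0 fps" and W :: "'a fps fps"
  assumes P: "pde_ok N f g W" and W0: "\<And>u. u < N \<Longrightarrow> W $ 0 $ u = 0"
    and f0: "f $ 0 = 1" and g0: "g $ 0 = 0"
  shows "u < N \<Longrightarrow> W $ v $ u = 0"
proof (induction v arbitrary: u rule: less_induct)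
  case (less v)
  show ?case
  proof (cases v)
    case 0 then show ?thesis using W0 less.prems by simp
  next
    case (Suc w)
    have "(\<Sum>i=0..w. f $ i * (of_nat (w - i + 1) * W $ (w - i + 1) $ u)) =
          (\<Sum>i=0..w. fps_deriv f $ i * (g * fps_deriv (W $ (w - i))) $ u)"
      using P less.prems unfolding pde_ok_def lhs_coeff rhs_coeff by blast
    also have "\<dots> = 0"
    proof (intro sum.neutral ballI)
      fix i assume "i \<in> {0..w}"
      then have "W $ (w - i) $ u' = 0" if "u' < N" for u'
        using less.IH[of "w - i" u'] Suc that by auto
      then show "fps_deriv f $ i * (g * fps_deriv (W $ (w - i))) $ u = 0"
        using g_deriv_zero[OF g0 _ less.prems, of "W $ (w - i)"] by simp
    qed
    also have "(\<Sum>i=0..w. f $ i * (of_nat (w - i + 1) * W $ (w - i + 1) $ u)) =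
          f $ 0 * (of_nat (w - 0 + 1) * W $ (w - 0 + 1) $ u)"
    proof (rule sum_single)
      fix i assume "i \<in> {0..w}" "i \<noteq> 0"
      then have "W $ (w - i + 1) $ u = 0" using less.IH[of "w - i + 1" u] Suc less.prems by auto
      then show "f $ i * (of_nat (w - i + 1) * W $ (w - i + 1) $ u) = 0" by simp
    qed auto
    finally have "of_nat (Suc w) * W $ Suc w $ u = 0" using f0 by simp
    then show ?thesis using Suc by (simp del: of_nat_Suc)
  qed
qed

lemma pde_ok_diff:
  assumes "pde_ok N f g W1" "pde_ok N f g W2"
  shows "pde_ok N f g (W1 - W2)"
  using assms unfolding pde_ok_def by (simp add: algebra_simps)

lemma pde_unique:
  fixes f g :: "'a::field_char_0 fps" and W1 W2 :: "'a fps fps"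
  assumes "pde_ok N f g W1" "pde_ok N f g W2" "\<And>u. u < N \<Longrightarrow> W1 $ 0 $ u = W2 $ 0 $ u"
    and f0: "f $ 0 = 1" and g0: "g $ 0 = 0" and u: "u < N"
  shows "W1 $ v $ u = W2 $ v $ u"
  using pde_unique_zero[OF pde_ok_diff[OF assms(1,2)] _ f0 g0 u, of v] assms(3) by simp


fun Wrec :: "'a::field fps \<Rightarrow> 'a fps \<Rightarrow> nat \<Rightarrow> 'a fps" where
  "Wrec f g 0 = fps_X"
| "Wrec f g (Suc w) = fps_const (inverse (of_nat (Suc w))) *
     ((\<Sum>i=0..w. fps_const (fps_deriv f $ i) * (g * fps_deriv (Wrec f g (w - i))))
      - (\<Sum>i\<in>{1..w}. fps_const (f $ i * of_nat (w - i + 1)) * Wrec f g (w - (i - 1))))"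

definition "Wser f g = Abs_fps (Wrec f g)"

definition pde_exact :: "'a::comm_ring_1 fps \<Rightarrow> 'a fps \<Rightarrow> 'a fps fps \<Rightarrow> bool" where
  "pde_exact f g W \<longleftrightarrow> lift_y f * fps_deriv W = fps_const g * lift_y (fps_deriv f) * deriv_x W"

lemma pde_exact_ok: "pde_exact f g W \<Longrightarrow> pde_ok N f g W"
  unfolding pde_exact_def pde_ok_def by simp

lemma Wser_pde:
  fixes f g :: "'a::field_char_0 fps"
  assumes f0: "f $ 0 = 1"
  shows "pde_exact f g (Wser f g)"
  unfolding pde_exact_def
proof (rule fps_ext)
  fix w
  let ?W = "Wrec f g"
  have L: "(lift_y f * fps_deriv (Wser f g)) $ w = (\<Sum>i=0..w. fps_const (f $ i) * (of_nat (w - i + 1) * ?W (w - i + 1)))"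
    unfolding fps_mult_nth lift_y_nth fps_deriv_nth Wser_def by simp
  have R: "(fps_const g * lift_y (fps_deriv f) * deriv_x (Wser f g)) $ w
      = (\<Sum>i=0..w. fps_const (fps_deriv f $ i) * (g * fps_deriv (?W (w - i))))"
  proof -
    have "(fps_const g * lift_y (fps_deriv f) * deriv_x (Wser f g)) $ w
        = g * (\<Sum>i=0..w. fps_const (fps_deriv f $ i) * fps_deriv (?W (w - i)))"
      unfolding mult.assoc fps_mult_left_const_nth unfolding fps_mult_nth lift_y_nth deriv_x_nth Wser_def
      by simp
    then show ?thesis by (simp add: sum_distrib_left mult_ac)
  qed
  have eq1: "(\<Sum>i=0..w. fps_const (f $ i) * (of_nat (w - i + 1) * ?W (w - i + 1)))
      = of_nat (w + 1) * ?W (w + 1) + (\<Sum>i\<in>{1..w}. fps_const (f $ i * of_nat (w - i + 1)) * ?W (w - (i - 1)))"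
  proof -
    have "(\<Sum>i=0..w. fps_const (f $ i) * (of_nat (w - i + 1) * ?W (w - i + 1)))
        = fps_const (f $ 0) * (of_nat (w - 0 + 1) * ?W (w - 0 + 1)) + (\<Sum>i\<in>{1..w}. fps_const (f $ i) * (of_nat (w - i + 1) * ?W (w - i + 1)))"
      by (simp add: sum.atLeast_Suc_atMost)
    also have "(\<Sum>i\<in>{1..w}. fps_const (f $ i) * (of_nat (w - i + 1) * ?W (w - i + 1)))
        = (\<Sum>i\<in>{1..w}. fps_const (f $ i * of_nat (w - i + 1)) * ?W (w - (i - 1)))"
    proof (intro sum.cong refl)
      fix i assume "i \<in> {1..w}"
      then have "w - i + 1 = w - (i - 1)" by auto
      then show "fps_const (f $ i) * (of_nat (w - i + 1) * ?W (w - i + 1)) = fps_const (f $ i * of_nat (w - i + 1)) * ?W (w - (i - 1))"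
        by (simp add: fps_of_nat[symmetric] mult_ac)
    qed
    finally show ?thesis using f0 by simp
  qed
  have eq2: "of_nat (w + 1) * ?W (w + 1) = (\<Sum>i=0..w. fps_const (fps_deriv f $ i) * (g * fps_deriv (?W (w - i))))
      - (\<Sum>i\<in>{1..w}. fps_const (f $ i * of_nat (w - i + 1)) * ?W (w - (i - 1)))"
  proof -
    have "(of_nat (w + 1) :: 'a fps) * fps_const (inverse (of_nat (Suc w))) = 1"
      by (simp add: fps_of_nat[symmetric] fps_const_mult[symmetric] del: fps_const_mult of_nat_Suc)
    moreover have "?W (w + 1) = fps_const (inverse (of_nat (Suc w))) *
     ((\<Sum>i=0..w. fps_const (fps_deriv f $ i) * (g * fps_deriv (?W (w - i))))
      - (\<Sum>i\<in>{1..w}. fps_const (f $ i * of_nat (w - i + 1)) * ?W (w - (i - 1))))"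
      by (simp only: Suc_eq_plus1[symmetric] Wrec.simps(2))
    ultimately show ?thesis by (simp only: mult.assoc[symmetric]) simp
  qed
  have "(lift_y f * fps_deriv (Wser f g)) $ w = (\<Sum>i=0..w. fps_const (fps_deriv f $ i) * (g * fps_deriv (?W (w - i))))
      - (\<Sum>i\<in>{1..w}. fps_const (f $ i * of_nat (w - i + 1)) * ?W (w - (i - 1)))
      + (\<Sum>i\<in>{1..w}. fps_const (f $ i * of_nat (w - i + 1)) * ?W (w - (i - 1)))"
    by (simp only: L eq1 eq2)
  also have "\<dots> = (fps_const g * lift_y (fps_deriv f) * deriv_x (Wser f g)) $ w"
    by (simp only: R diff_add_cancel)
  finally show "(lift_y f * fps_deriv (Wser f g)) $ w = (fps_const g * lift_y (fps_deriv f) * deriv_x (Wser f g)) $ w" .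
qed


lemma pde_exact_power:
  assumes "pde_exact f g G"
  shows "pde_exact f g (G ^ m)"
proof (cases m)
  case 0
  then show ?thesis unfolding pde_exact_def
    by (simp add: deriv_x_const[of 1, simplified])
next
  case (Suc k)
  have d: "fps_deriv (G ^ Suc k) = of_nat (Suc k) * fps_deriv G * G ^ k"
    using fps_deriv_power'[of G "Suc k"] by simp
  have "lift_y f * fps_deriv (G ^ Suc k) = (of_nat (Suc k) * G ^ k) * (lift_y f * fps_deriv G)"
    by (simp only: d mult_ac)
  also have "\<dots> = (of_nat (Suc k) * G ^ k) * (fps_const g * lift_y (fps_deriv f) * deriv_x G)"
    using assms unfolding pde_exact_def by simp
  also have "\<dots> = fps_const g * lift_y (fps_deriv f) * deriv_x (G ^ Suc k)"
    by (simp only: deriv_x_power mult_ac)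
  finally show ?thesis using Suc unfolding pde_exact_def by simp
qed

lemma pde_exact_add:
  "pde_exact f g A \<Longrightarrow> pde_exact f g B \<Longrightarrow> pde_exact f g (A + B)"
  unfolding pde_exact_def by (simp add: algebra_simps)

lemma pde_exact_zero: "pde_exact f g 0"
  unfolding pde_exact_def by (simp add: deriv_x_const[of 0, simplified])

lemma pde_exact_scale:
  assumes "pde_exact f g A"
  shows "pde_exact f g (fps_const (fps_const a) * A)"
proof -
  let ?K = "fps_const (fps_const a)"
  have "lift_y f * fps_deriv (?K * A) = ?K * (lift_y f * fps_deriv A)" by (simp add: mult_ac)
  also have "\<dots> = ?K * (fps_const g * lift_y (fps_deriv f) * deriv_x A)"
    using assms unfolding pde_exact_def by simp
  also have "\<dots> = fps_const g * lift_y (fps_deriv f) * deriv_x (?K * A)"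
    by (simp add: deriv_x_mult mult_ac)
  finally show ?thesis unfolding pde_exact_def .
qed

lemma pde_exact_sum:
  "(\<And>m. m \<in> S \<Longrightarrow> pde_exact f g (A m)) \<Longrightarrow> pde_exact f g (\<Sum>m\<in>S. A m)"
  by (induction S rule: infinite_finite_induct) (auto intro: pde_exact_add pde_exact_zero)

lemma pde_exact_flow:
  fixes f g :: "'a::comm_ring_1 fps"
  assumes "pde_exact f g G"
  shows "pde_exact f g (deriv_x G * fps_const g)"
proof -
  have E: "lift_y f * fps_deriv G = fps_const g * lift_y (fps_deriv f) * deriv_x G"
    using assms unfolding pde_exact_def .
  have "lift_y f * fps_deriv (deriv_x G * fps_const g) = lift_y f * deriv_x (fps_deriv G) * fps_const g"
    by (simp add: deriv_x_comm mult_ac)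
  also have "lift_y f * deriv_x (fps_deriv G) = deriv_x (lift_y f * fps_deriv G)"
    by (simp add: deriv_x_mult)
  also have "\<dots> = deriv_x (fps_const g * lift_y (fps_deriv f) * deriv_x G)" by (simp only: E)
  also have "\<dots> * fps_const g = fps_const g * lift_y (fps_deriv f) * deriv_x (deriv_x G * fps_const g)"
    by (simp add: deriv_x_mult algebra_simps)
  finally show ?thesis unfolding pde_exact_def .
qed


declare One_nat_def [simp del]

locale std =
  fixes n :: nat and ps :: "nat \<Rightarrow> 'a::field_char_0"
  assumes n2: "n \<ge> 2"
begin

abbreviation "F \<equiv> scc_f n 1 ps"
abbreviation "Gg \<equiv> scc_g n 1 ps"

lemma F_nth: "F $ k = (if k = 0 then 1 else if k = 1 then 1 else if k < n then ps k else 0)"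
proof -
  have "(\<Sum>v\<in>{1 + 1..<n}. fps_const (ps v) * fps_X ^ v) $ k = (if 2 \<le> k \<and> k < n then ps k else 0)"
    by (simp add: fps_sum_nth fps_X_power_nth ifz_mult)
  then show ?thesis unfolding scc_f_def by (auto simp: fps_X_power_nth)
qed

lemma F0: "F $ 0 = 1" by (simp add: F_nth)
lemma F1: "F $ 1 = 1" "F $ Suc 0 = 1" by (simp_all add: F_nth)
lemma dF0: "fps_deriv F $ 0 = 1" by (simp add: fps_deriv_nth F_nth)

lemma Gg_def': "Gg = F * (F - 1) * inverse (fps_deriv F)"
  unfolding scc_g_def using dF0 by (simp add: fps_divide_unit)

lemma Gg_mul: "Gg * fps_deriv F = F * (F - 1)"
  unfolding Gg_def' using dF0 by (simp add: mult.assoc inverse_mult_eq_1)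

lemma Gg0: "Gg $ 0 = 0"
  unfolding Gg_def' by (simp add: F0)

lemma Gg1: "Gg $ 1 = 1"
proof -
  have "(F * (F - 1)) $ 1 = 1" using F0 F1 by (simp add: fps_mult_nth atLeast0AtMost sum_le1)
  moreover have "(F * (F - 1)) $ 0 = 0" using F0 by simp
  ultimately show ?thesis unfolding Gg_def' using dF0
    by (simp add: fps_mult_nth atLeast0AtMost sum_le1)
qed

lemma pred_iff: "(G $ 0 = fps_X \<and> fps_deriv G = fps_const Gg * lift_y (fps_deriv F) * deriv_x G
                    - (lift_y F - 1) * fps_deriv G) \<longleftrightarrow> (G $ 0 = fps_X \<and> pde_exact F Gg G)"
  unfolding pde_exact_def by (auto simp: algebra_simps)

lemma G_eq: "scc_G n 1 ps = Wser F Gg"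
proof -
  have W: "Wser F Gg $ 0 = fps_X \<and> pde_exact F Gg (Wser F Gg)"
    using Wser_pde[OF F0] by (simp add: Wser_def)
  show ?thesis unfolding scc_G_def
  proof (rule the_equality)
    show "Wser F Gg $ 0 = fps_X \<and> fps_deriv (Wser F Gg) = fps_const Gg * lift_y (fps_deriv F) * deriv_x (Wser F Gg)
                    - (lift_y F - 1) * fps_deriv (Wser F Gg)" using W pred_iff by blast
  next
    fix G assume "G $ 0 = fps_X \<and> fps_deriv G = fps_const Gg * lift_y (fps_deriv F) * deriv_x G
                    - (lift_y F - 1) * fps_deriv G"
    then have G: "G $ 0 = fps_X" "pde_exact F Gg G" using pred_iff by blast+
    show "G = Wser F Gg"
    proof (intro fps_ext)
      fix v u
      show "G $ v $ u = Wser F Gg $ v $ u"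
        by (rule pde_unique[OF pde_exact_ok[OF G(2)] pde_exact_ok[OF W[THEN conjunct2]] _ F0 Gg0, of "Suc u"])
           (use G W in auto)
    qed
  qed
qed

abbreviation "G \<equiv> scc_G n 1 ps"

lemma G_pde: "pde_exact F Gg G" using Wser_pde[OF F0] G_eq by simp
lemma G0: "G $ 0 = fps_X" using G_eq by (simp add: Wser_def)

lemma G_row0: "G $ v $ 0 = 0"
  by (rule pde_unique_zero[OF pde_exact_ok[OF G_pde, of 1] _ F0 Gg0]) (auto simp: G0)

lemma G1: "G $ 1 = Gg"
proof -
  have "(lift_y F * fps_deriv G) $ 0 = (fps_const Gg * lift_y (fps_deriv F) * deriv_x G) $ 0"
    using G_pde unfolding pde_exact_def by simp
  then show ?thesis using F0 dF0 G0 by simp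
qed

end


declare One_nat_def [simp del]

lemma deriv_mult_local:
  fixes X Y g :: "'a::comm_ring_1 fps"
  assumes "g $ 0 = 0" "\<And>m. m \<le> h \<Longrightarrow> X $ m = Y $ m"
  shows "(fps_deriv X * g) $ h = (fps_deriv Y * g) $ h"
  unfolding fps_mult_nth
proof (intro sum.cong refl)
  fix m assume "m \<in> {0..h}"
  then show "fps_deriv X $ m * g $ (h - m) = fps_deriv Y $ m * g $ (h - m)"
    using assms by (cases "m = h") (auto simp: fps_deriv_nth)
qed

context std
begin

definition "Aser = (\<Sum>m<n. fps_const (fps_const (Gg $ m)) * G ^ m)"
definition "Bser = deriv_x G * fps_const Gg"

lemma A_pde: "pde_exact F Gg Aser"
  unfolding Aser_def by (intro pde_exact_sum pde_exact_scale pde_exact_power G_pde)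

lemma B_pde: "pde_exact F Gg Bser"
  unfolding Bser_def by (rule pde_exact_flow[OF G_pde])

lemma A_nth: "Aser $ v $ u = (\<Sum>k<n. Gg $ k * (G ^ k) $ v $ u)"
  unfolding Aser_def by (simp add: fps_sum_nth)

lemma AB: "u < n \<Longrightarrow> Aser $ v $ u = Bser $ v $ u"
proof (rule pde_unique[OF pde_exact_ok[OF A_pde] pde_exact_ok[OF B_pde] _ F0 Gg0])
  fix u assume u: "u < n"
  have "Aser $ 0 $ u = (\<Sum>k<n. Gg $ k * (if u = k then 1 else 0))"
    unfolding A_nth by (simp add: pow_row0_col G0 fps_X_power_nth)
  also have "\<dots> = Gg $ u" using u by (simp add: ifz_mult)
  finally show "Aser $ 0 $ u = Bser $ 0 $ u" by (simp add: Bser_def G0)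
qed

lemma ident: "fps_deriv G * lift_y Gg + Bser = lift_y F * Bser"
proof -
  let ?L = "fps_deriv G * lift_y Gg + Bser"
  have "lift_y F * ?L = (lift_y F * fps_deriv G) * lift_y Gg + lift_y F * Bser"
    by (simp add: algebra_simps)
  also have "\<dots> = (fps_const Gg * lift_y (fps_deriv F) * deriv_x G) * lift_y Gg + lift_y F * Bser"
    using G_pde unfolding pde_exact_def by simp
  also have "\<dots> = Bser * lift_y (Gg * fps_deriv F) + lift_y F * Bser"
    by (simp add: Bser_def lift_y_mult mult_ac)
  also have "\<dots> = lift_y F * (lift_y F * Bser)"
    by (simp add: Gg_mul lift_y_mult lift_y_diff algebra_simps)
  finally have e: "lift_y F * ?L = lift_y F * (lift_y F * Bser)" .
  have inv: "lift_y (inverse F) * lift_y F = 1"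
    using F0 by (simp add: lift_y_mult[symmetric] inverse_mult_eq_1)
  have "?L = lift_y (inverse F) * (lift_y F * ?L)" by (simp add: mult.assoc[symmetric] inv)
  also have "\<dots> = lift_y (inverse F) * (lift_y F * (lift_y F * Bser))" by (simp only: e)
  also have "\<dots> = lift_y F * Bser" by (simp add: mult.assoc[symmetric] inv)
  finally show ?thesis .
qed

lemma R_G: "Rrel n G F Gg"
  unfolding Rrel_def
proof (intro allI impI)
  fix i h assume i: "i < n" and h: "h < n"
  have c1: "(fps_deriv G * lift_y Gg) $ h $ i = (fps_deriv (colf G i) * Gg) $ h"
  proof -
    have "(fps_deriv G * lift_y Gg) $ h = (\<Sum>m=0..h. fps_deriv G $ m * fps_const (Gg $ (h - m)))"
      unfolding fps_mult_nth lift_y_nth ..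
    then have "(fps_deriv G * lift_y Gg) $ h $ i = (\<Sum>m=0..h. (fps_deriv G $ m) $ i * Gg $ (h - m))"
      by (simp only: fps_sum_nth fps_mult_right_const_nth)
    also have "\<dots> = (\<Sum>m=0..h. of_nat (m + 1) * G $ (m + 1) $ i * Gg $ (h - m))"
      by (simp only: fps_deriv_nth of_nat_mult_nth)
    also have "\<dots> = (fps_deriv (colf G i) * Gg) $ h"
      unfolding fps_mult_nth fps_deriv_nth colf_def by simp
    finally show ?thesis .
  qed
  have c2: "Bser $ h $ i = (fps_deriv (G $ h) * Gg) $ i"
    by (simp add: Bser_def)
  have c3: "(lift_y F * Bser) $ h $ i = (\<Sum>h1=0..h. F $ h1 * Bser $ (h - h1) $ i)"
  proof -
    have "(lift_y F * Bser) $ h = (\<Sum>h1=0..h. fps_const (F $ h1) * Bser $ (h - h1))"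
      unfolding fps_mult_nth lift_y_nth ..
    then show ?thesis by (simp only: fps_sum_nth fps_mult_left_const_nth)
  qed
  have "(fps_deriv (colf G i) * Gg) $ h + (fps_deriv (G $ h) * Gg) $ i = (lift_y F * Bser) $ h $ i"
    using arg_cong[OF ident, of "\<lambda>X. X $ h $ i"] c1 c2 by simp
  also have "\<dots> = (\<Sum>h1=0..h. F $ h1 * Aser $ (h - h1) $ i)"
    unfolding c3 using AB[OF i] by simp
  also have "\<dots> = (\<Sum>h1\<le>h. \<Sum>k<n. (G ^ k) $ (h - h1) $ i * F $ h1 * Gg $ k)"
    by (simp add: A_nth atLeast0AtMost sum_distrib_left mult_ac)
  finally show "(fps_deriv (colf G i) * Gg) $ h + (fps_deriv (G $ h) * Gg) $ i =
      (\<Sum>h1\<le>h. \<Sum>k<n. (G ^ k) $ (h - h1) $ i * F $ h1 * Gg $ k)" .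
qed

definition "Gt = toF (\<lambda>i j. if i < n \<and> j < n then G $ j $ i else 0)"

lemma Gt_nth: "Gt $ j $ i = (if i < n \<and> j < n then G $ j $ i else 0)"
  by (simp add: Gt_def)

lemma Gt_pow: "i < n \<Longrightarrow> j < n \<Longrightarrow> (Gt ^ k) $ j $ i = (G ^ k) $ j $ i"
  by (rule pow_local) (auto simp: Gt_nth)

lemma R_Gt: "Rrel n Gt F Gg"
  unfolding Rrel_def
proof (intro allI impI)
  fix i h assume i: "i < n" and h: "h < n"
  have "(fps_deriv (colf Gt i) * Gg) $ h = (fps_deriv (colf G i) * Gg) $ h"
    by (rule deriv_mult_local[OF Gg0]) (use i h in \<open>auto simp: colf_def Gt_nth\<close>)
  moreover have "(fps_deriv (Gt $ h) * Gg) $ i = (fps_deriv (G $ h) * Gg) $ i"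
    by (rule deriv_mult_local[OF Gg0]) (use i h in \<open>auto simp: Gt_nth\<close>)
  moreover have "(\<Sum>h1\<le>h. \<Sum>k<n. (Gt ^ k) $ (h - h1) $ i * F $ h1 * Gg $ k)
      = (\<Sum>h1\<le>h. \<Sum>k<n. (G ^ k) $ (h - h1) $ i * F $ h1 * Gg $ k)"
    using i h by (intro sum.cong refl) (simp add: Gt_pow)
  ultimately show "(fps_deriv (colf Gt i) * Gg) $ h + (fps_deriv (Gt $ h) * Gg) $ i =
      (\<Sum>h1\<le>h. \<Sum>k<n. (Gt ^ k) $ (h - h1) $ i * F $ h1 * Gg $ k)"
    using R_G i h unfolding Rrel_def by simp
qed

lemma Gt_row0: "Gt $ j $ 0 = 0" by (simp add: Gt_nth G_row0)
lemma Gt_col0: "Gt $ 0 = fps_X"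
  using n2 by (intro fps_ext) (auto simp: Gt_nth G0)

lemma scc_pow: "scc n 1 ps u v w = (G ^ w) $ v $ u"
proof (induction w arbitrary: u v)
  case 0 then show ?case by (simp add: scc_def)
next
  case (Suc w)
  show ?case
  proof (cases "w = 0")
    case True then show ?thesis by (simp add: scc_def scc1_def)
  next
    case False
    have "scc n 1 ps u v (Suc w) = (\<Sum>u1\<le>u. \<Sum>v1\<le>v. G $ v1 $ u1 * (G ^ w) $ (v - v1) $ (u - u1))"
      using False Suc.IH by (simp add: scc_def scc1_def)
    also have "\<dots> = (G ^ Suc w) $ v $ u"
      by (simp add: fps2_mult_nth sum.swap[of _ "{..u}"])
    finally show ?thesis .
  qed
qed

lemma scc_111: "scc n 1 ps 1 1 1 = 1"
  using scc_pow[of 1 1 1] G1 Gg1 by simp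

end


declare One_nat_def [simp del]

lemma Rrel_transfer:
  assumes "Rrel n Q f g" "eqm n f f'" "eqm n g g'"
  shows "Rrel n Q f' g'"
  unfolding Rrel_def
proof (intro allI impI)
  fix i h assume i: "i < n" and h: "h < n"
  have e1: "(fps_deriv (colf Q i) * g) $ h = (fps_deriv (colf Q i) * g') $ h"
    using eqm_mult[OF eqm_refl assms(3), of "fps_deriv (colf Q i)"] h unfolding eqm_def by blast
  have e2: "(fps_deriv (Q $ h) * g) $ i = (fps_deriv (Q $ h) * g') $ i"
    using eqm_mult[OF eqm_refl assms(3), of "fps_deriv (Q $ h)"] i unfolding eqm_def by blast
  have e3: "(\<Sum>h1\<le>h. \<Sum>k<n. (Q ^ k) $ (h - h1) $ i * f $ h1 * g $ k) =
        (\<Sum>h1\<le>h. \<Sum>k<n. (Q ^ k) $ (h - h1) $ i * f' $ h1 * g' $ k)"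
    using assms(2,3) h unfolding eqm_def by (intro sum.cong refl) auto
  show "(fps_deriv (colf Q i) * g') $ h + (fps_deriv (Q $ h) * g') $ i =
        (\<Sum>h1\<le>h. \<Sum>k<n. (Q ^ k) $ (h - h1) $ i * f' $ h1 * g' $ k)"
  proof -
    have E: "(fps_deriv (colf Q i) * g) $ h + (fps_deriv (Q $ h) * g) $ i =
        (\<Sum>h1\<le>h. \<Sum>k<n. (Q ^ k) $ (h - h1) $ i * f $ h1 * g $ k)"
      using assms(1) i h unfolding Rrel_def by blast
    show ?thesis using E unfolding e1 e2 e3 .
  qed
qed

locale qcyc1 = qcyc +
  assumes one: "p 1 1 1 = 1"
begin

definition "ps = (\<lambda>v. p 1 v 1)"

sublocale S: std n ps by (unfold_locales) (rule n2)

lemma c1: "c = 1" using one n2 by (simp add: c_def trm_nth)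

lemma fP_F: "fP = S.F"
proof (rule fps_ext)
  fix j
  show "fP $ j = S.F $ j"
    using P01 c1 n2 unfolding S.F_nth fP_def by (auto simp: trm_nth ps_def c_def)
qed

lemma hP_Gg: "eqm n hP S.Gg"
proof -
  have "eqm n (fps_deriv S.F * hP) (fps_deriv S.F * S.Gg)"
    unfolding eqm_def
  proof (intro allI impI)
    fix j assume j: "j < n"
    have "(fps_deriv S.F * hP) $ j = (S.F * S.F) $ j - S.F $ j"
      using rel_sub[OF relC[OF j]] hP_kD fP_F c1 by simp
    also have "\<dots> = (fps_deriv S.F * S.Gg) $ j"
    proof -
      have "fps_deriv S.F * S.Gg = S.F * S.F - S.F"
        using S.Gg_mul by (simp add: mult.commute right_diff_distrib)
      then show ?thesis by simp
    qed
    finally show "(fps_deriv S.F * hP) $ j = (fps_deriv S.F * S.Gg) $ j" .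
  qed
  then show ?thesis by (rule eqm_cancel[rotated]) (simp add: S.dF0 S.F1)
qed

lemma P_Gt: "i < n \<Longrightarrow> j < n \<Longrightarrow> P $ j $ i = S.Gt $ j $ i"
proof -
  assume i: "i < n" and j: "j < n"
  have R1: "Rrel n P S.F S.Gg"
    using Rrel_transfer[OF R_P _ hP_Gg] fP_F by simp
  show ?thesis
    using R_unique[OF R1 S.R_Gt P_row0 S.Gt_row0 P_col0 S.Gt_col0 S.Gg0 _ S.F0 i j] S.Gg1 by simp
qed

lemma p_scc: "i < n \<Longrightarrow> j < n \<Longrightarrow> k < n \<Longrightarrow> p i j k = scc n 1 ps i j k"
proof -
  assume i: "i < n" and j: "j < n" and k: "k < n"
  have "P = S.Gt"
  proof (intro fps_ext)
    fix a b show "P $ a $ b = S.Gt $ a $ b"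
      using P_Gt by (cases "b < n \<and> a < n") (auto simp: trm_nth S.Gt_nth)
  qed
  then show ?thesis
    using coalg_pow_tr[OF cp k i j] S.Gt_pow[OF i j, of k] S.scc_pow[of i j k] by simp
qed

lemma d_scc: "i < n \<Longrightarrow> j < n \<Longrightarrow> k < n \<Longrightarrow> d i j k = scc n 1 ps i j k"
  using p_scc d_eq_p by simp

end


declare One_nat_def [simp del]

definition sc :: "'a::field \<Rightarrow> 'a sconst \<Rightarrow> 'a sconst" where
  "sc lam m i j k = lam powi (int k - int i - int j) * m i j k"

lemma powi_comb: "(lam::'a::field) \<noteq> 0 \<Longrightarrow> a + b = c \<Longrightarrow> lam powi a * lam powi b = lam powi c"
  by (metis power_int_add)

lemma sum_scale: "(\<And>x. x \<in> A \<Longrightarrow> f x = c * g x) \<Longrightarrow> sum f A = (c::'a::comm_ring_1) * sum g A"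
  by (simp add: sum_distrib_left)

lemma sc_coalg:
  assumes lam: "(lam::'a::field) \<noteq> 0" and cm: "coalg_morph n m"
  shows "coalg_morph n (sc lam m)"
  unfolding coalg_morph_def
proof (intro conjI allI impI)
  fix i j assume "i < n" "j < n"
  then show "sc lam m i j 0 = (if i = 0 \<and> j = 0 then 1 else 0)"
    using coalg0[OF cm] by (auto simp: sc_def)
next
  fix i j k1 k2 assume ij: "i < n" "j < n" "k1 < n" "k2 < n"
  have "(\<Sum>i1\<le>i. \<Sum>j1\<le>j. sc lam m i1 j1 k1 * sc lam m (i - i1) (j - j1) k2)
      = lam powi (int (k1 + k2) - int i - int j) * (\<Sum>i1\<le>i. \<Sum>j1\<le>j. m i1 j1 k1 * m (i - i1) (j - j1) k2)"
  proof (rule sum_scale)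
    fix i1 assume i1: "i1 \<in> {..i}"
    show "(\<Sum>j1\<le>j. sc lam m i1 j1 k1 * sc lam m (i - i1) (j - j1) k2) =
        lam powi (int (k1 + k2) - int i - int j) * (\<Sum>j1\<le>j. m i1 j1 k1 * m (i - i1) (j - j1) k2)"
    proof (rule sum_scale)
      fix j1 assume j1: "j1 \<in> {..j}"
      have "lam powi (int k1 - int i1 - int j1) * lam powi (int k2 - int (i - i1) - int (j - j1))
          = lam powi (int (k1 + k2) - int i - int j)"
        by (rule powi_comb[OF lam]) (use i1 j1 in \<open>auto simp: of_nat_diff\<close>)
      moreover have "sc lam m i1 j1 k1 * sc lam m (i - i1) (j - j1) k2 =
          (lam powi (int k1 - int i1 - int j1) * lam powi (int k2 - int (i - i1) - int (j - j1)))
          * (m i1 j1 k1 * m (i - i1) (j - j1) k2)"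
        unfolding sc_def by (simp only: ac_simps)
      ultimately show "sc lam m i1 j1 k1 * sc lam m (i - i1) (j - j1) k2 =
          lam powi (int (k1 + k2) - int i - int j) * (m i1 j1 k1 * m (i - i1) (j - j1) k2)"
        by simp
    qed
  qed
  also have "(\<Sum>i1\<le>i. \<Sum>j1\<le>j. m i1 j1 k1 * m (i - i1) (j - j1) k2) = (if k1 + k2 < n then m i j (k1 + k2) else 0)"
    using coalgD[OF cm ij] by simp
  finally show "(if k1 + k2 < n then sc lam m i j (k1 + k2) else 0) =
      (\<Sum>i1\<le>i. \<Sum>j1\<le>j. sc lam m i1 j1 k1 * sc lam m (i - i1) (j - j1) k2)"
    by (auto simp: sc_def)
qed

lemma ap2_sc:
  assumes lam: "(lam::'a::field) \<noteq> 0"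
  shows "ap2 n (sc lam m) (\<lambda>k. lam powi (int k - a) * F k) (\<lambda>k. lam powi (int k - b) * G k) r
       = lam powi (int r - a - b) * ap2 n m F G r"
  unfolding ap2_def
proof (rule sum_scale)
  fix k assume "k \<in> {..<n}"
  show "(\<Sum>k'<n. lam powi (int k - a) * F k * (lam powi (int k' - b) * G k') * sc lam m k k' r) =
      lam powi (int r - a - b) * (\<Sum>k'<n. F k * G k' * m k k' r)"
  proof (rule sum_scale)
    fix k' assume "k' \<in> {..<n}"
    have "lam powi (int k - a) * lam powi (int k' - b) = lam powi (int k + int k' - a - b)"
      by (rule powi_comb[OF lam]) simp
    moreover have "lam powi (int k + int k' - a - b) * lam powi (int r - int k - int k') = lam powi (int r - a - b)"
      by (rule powi_comb[OF lam]) simp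
    moreover have "lam powi (int k - a) * F k * (lam powi (int k' - b) * G k') * sc lam m k k' r =
        (lam powi (int k - a) * lam powi (int k' - b) * lam powi (int r - int k - int k')) * (F k * G k' * m k k' r)"
      unfolding sc_def by (simp only: ac_simps)
    ultimately show "lam powi (int k - a) * F k * (lam powi (int k' - b) * G k') * sc lam m k k' r =
        lam powi (int r - a - b) * (F k * G k' * m k k' r)"
      by simp
  qed
qed

lemma mv_sc: "mv (sc lam m) i j = (\<lambda>k. lam powi (int k - (int i + int j)) * mv m i j k)"
  by (auto simp: mv_def sc_def algebra_simps)

lemma kd_sc: "(\<lambda>k. kd k c) = (\<lambda>k. (lam::'a::field) powi (int k - int c) * kd k c)"
  by (auto simp: kd_def)

lemma kd_scale: "(lam::'a::field) powi (int r - int i - int j) * (kd j 0 * kd i r) = kd j 0 * kd i r"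
  by (auto simp: kd_def)


lemma T1:
  assumes lam: "(lam::'a::field) \<noteq> 0" and "j1 \<le> j"
  shows "ap2 n (sc lam m) (mv (sc lam m1) i j1) (mv (sc lam m2) h (j - j1)) r
     = lam powi (int r - int i - int j - int h) * ap2 n m (mv m1 i j1) (mv m2 h (j - j1)) r"
proof -
  have "ap2 n (sc lam m) (mv (sc lam m1) i j1) (mv (sc lam m2) h (j - j1)) r
     = lam powi (int r - (int i + int j1) - (int h + int (j - j1))) * ap2 n m (mv m1 i j1) (mv m2 h (j - j1)) r"
    unfolding mv_sc by (rule ap2_sc[OF lam])
  moreover have e: "int r - (int i + int j1) - (int h + int (j - j1)) = int r - int i - int j - int h"
    using assms(2) by (simp add: of_nat_diff)
  ultimately show ?thesis by (simp only: e)
qed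

lemma T2:
  assumes lam: "(lam::'a::field) \<noteq> 0" and "h1 \<le> h"
  shows "ap2 n (sc lam m) (mv (sc lam m1) i (h - h1)) (mv (sc lam m2) j h1) r
     = lam powi (int r - int i - int j - int h) * ap2 n m (mv m1 i (h - h1)) (mv m2 j h1) r"
proof -
  have "ap2 n (sc lam m) (mv (sc lam m1) i (h - h1)) (mv (sc lam m2) j h1) r
     = lam powi (int r - (int i + int (h - h1)) - (int j + int h1)) * ap2 n m (mv m1 i (h - h1)) (mv m2 j h1) r"
    unfolding mv_sc by (rule ap2_sc[OF lam])
  moreover have e: "int r - (int i + int (h - h1)) - (int j + int h1) = int r - int i - int j - int h"
    using assms(2) by (simp add: of_nat_diff)
  ultimately show ?thesis by (simp only: e)
qed

lemma M1:
  assumes lam: "(lam::'a::field) \<noteq> 0" and "j1 \<le> j"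
  shows "ap2 n (sc lam m) (mv (sc lam m1) i j1) (\<lambda>k. kd k (j - j1)) r
     = lam powi (int r - int i - int j) * ap2 n m (mv m1 i j1) (\<lambda>k. kd k (j - j1)) r"
proof -
  have "ap2 n (sc lam m) (mv (sc lam m1) i j1) (\<lambda>k. kd k (j - j1)) r
     = ap2 n (sc lam m) (\<lambda>k. lam powi (int k - (int i + int j1)) * mv m1 i j1 k)
         (\<lambda>k. lam powi (int k - int (j - j1)) * kd k (j - j1)) r"
    by (simp only: mv_sc kd_sc[of "j - j1" lam, symmetric])
  also have "\<dots> = lam powi (int r - (int i + int j1) - int (j - j1)) * ap2 n m (mv m1 i j1) (\<lambda>k. kd k (j - j1)) r"
    by (rule ap2_sc[OF lam])
  also have "int r - (int i + int j1) - int (j - j1) = int r - int i - int j"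
    using assms(2) by (simp add: of_nat_diff)
  finally show ?thesis .
qed

lemma M3:
  assumes lam: "(lam::'a::field) \<noteq> 0" and "j1 \<le> j"
  shows "ap2 n (sc lam m) (mv (sc lam m1) i (j - j1)) (\<lambda>k. kd k j1) r
     = lam powi (int r - int i - int j) * ap2 n m (mv m1 i (j - j1)) (\<lambda>k. kd k j1) r"
proof -
  have "ap2 n (sc lam m) (mv (sc lam m1) i (j - j1)) (\<lambda>k. kd k j1) r
     = ap2 n (sc lam m) (\<lambda>k. lam powi (int k - (int i + int (j - j1))) * mv m1 i (j - j1) k)
         (\<lambda>k. lam powi (int k - int j1) * kd k j1) r"
    by (simp only: mv_sc kd_sc[of "j1" lam, symmetric])
  also have "\<dots> = lam powi (int r - (int i + int (j - j1)) - int j1) * ap2 n m (mv m1 i (j - j1)) (\<lambda>k. kd k j1) r"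
    by (rule ap2_sc[OF lam])
  also have "int r - (int i + int (j - j1)) - int j1 = int r - int i - int j"
    using assms(2) by (simp add: of_nat_diff)
  finally show ?thesis .
qed

lemma sc_cycle:
  assumes lam: "(lam::'a::field) \<noteq> 0" and cyc: "regular_q_cycle n p d"
  shows "regular_q_cycle n (sc lam p) (sc lam d)"
proof -
  have mag: "regular_q_magma n p d" using cyc unfolding regular_q_cycle_def by blast
  obtain u l where cp: "coalg_morph n p" and cd: "coalg_morph n d" and cu: "coalg_morph n u" and cl: "coalg_morph n l"
    and R: "\<forall>i<n. \<forall>j<n. \<forall>r<n.
         (\<Sum>j1\<le>j. ap2 n p (mv u i j1) (\<lambda>k. kd k (j - j1)) r) = kd j 0 * kd i r \<and>
         (\<Sum>j1\<le>j. ap2 n u (mv p i j1) (\<lambda>k. kd k (j - j1)) r) = kd j 0 * kd i r \<and>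
         (\<Sum>j1\<le>j. ap2 n l (mv d i (j - j1)) (\<lambda>k. kd k j1) r) = kd j 0 * kd i r \<and>
         (\<Sum>j1\<le>j. ap2 n d (mv l i (j - j1)) (\<lambda>k. kd k j1) r) = kd j 0 * kd i r"
    using mag unfolding regular_q_magma_def by blast
  have C: "\<forall>i<n. \<forall>j<n. \<forall>h<n. \<forall>r<n.
      (\<Sum>j1\<le>j. ap2 n p (mv p i j1) (mv d h (j - j1)) r) =
      (\<Sum>h1\<le>h. ap2 n p (mv p i (h - h1)) (mv p j h1) r) \<and>
      (\<Sum>j1\<le>j. ap2 n d (mv p i j1) (mv p h (j - j1)) r) =
      (\<Sum>h1\<le>h. ap2 n p (mv d i (h - h1)) (mv d j h1) r) \<and>
      (\<Sum>j1\<le>j. ap2 n d (mv d i j1) (mv d h (j - j1)) r) =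
      (\<Sum>h1\<le>h. ap2 n d (mv d i (h - h1)) (mv p j h1) r)"
    using cyc unfolding regular_q_cycle_def by blast
  have co: "coalg_morph n (sc lam p)" "coalg_morph n (sc lam d)" "coalg_morph n (sc lam u)" "coalg_morph n (sc lam l)"
    using sc_coalg[OF lam] cp cd cu cl by blast+
  have RR: "\<forall>i<n. \<forall>j<n. \<forall>r<n.
         (\<Sum>j1\<le>j. ap2 n (sc lam p) (mv (sc lam u) i j1) (\<lambda>k. kd k (j - j1)) r) = kd j 0 * kd i r \<and>
         (\<Sum>j1\<le>j. ap2 n (sc lam u) (mv (sc lam p) i j1) (\<lambda>k. kd k (j - j1)) r) = kd j 0 * kd i r \<and>
         (\<Sum>j1\<le>j. ap2 n (sc lam l) (mv (sc lam d) i (j - j1)) (\<lambda>k. kd k j1) r) = kd j 0 * kd i r \<and>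
         (\<Sum>j1\<le>j. ap2 n (sc lam d) (mv (sc lam l) i (j - j1)) (\<lambda>k. kd k j1) r) = kd j 0 * kd i r"
  proof (intro allI impI conjI)
    fix i j r assume ijr: "i < n" "j < n" "r < n"
    note Ri = R[rule_format, OF ijr]
    show "(\<Sum>j1\<le>j. ap2 n (sc lam p) (mv (sc lam u) i j1) (\<lambda>k. kd k (j - j1)) r) = kd j 0 * kd i r"
      using Ri by (subst sum_scale[OF M1[OF lam]]) (auto simp: kd_scale)
    show "(\<Sum>j1\<le>j. ap2 n (sc lam u) (mv (sc lam p) i j1) (\<lambda>k. kd k (j - j1)) r) = kd j 0 * kd i r"
      using Ri by (subst sum_scale[OF M1[OF lam]]) (auto simp: kd_scale)
    show "(\<Sum>j1\<le>j. ap2 n (sc lam l) (mv (sc lam d) i (j - j1)) (\<lambda>k. kd k j1) r) = kd j 0 * kd i r"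
      using Ri by (subst sum_scale[OF M3[OF lam]]) (auto simp: kd_scale)
    show "(\<Sum>j1\<le>j. ap2 n (sc lam d) (mv (sc lam l) i (j - j1)) (\<lambda>k. kd k j1) r) = kd j 0 * kd i r"
      using Ri by (subst sum_scale[OF M3[OF lam]]) (auto simp: kd_scale)
  qed
  have mag': "regular_q_magma n (sc lam p) (sc lam d)"
    unfolding regular_q_magma_def using co RR by blast
  show ?thesis
    unfolding regular_q_cycle_def
  proof (intro conjI mag' allI impI)
    fix i j h r assume ijhr: "i < n" "j < n" "h < n" "r < n"
    note Ci = C[rule_format, OF ijhr]
    show "(\<Sum>j1\<le>j. ap2 n (sc lam p) (mv (sc lam p) i j1) (mv (sc lam d) h (j - j1)) r) =
      (\<Sum>h1\<le>h. ap2 n (sc lam p) (mv (sc lam p) i (h - h1)) (mv (sc lam p) j h1) r)"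
      using Ci by (subst sum_scale[OF T1[OF lam]], simp, subst sum_scale[OF T2[OF lam]], simp, simp)
    show "(\<Sum>j1\<le>j. ap2 n (sc lam d) (mv (sc lam p) i j1) (mv (sc lam p) h (j - j1)) r) =
      (\<Sum>h1\<le>h. ap2 n (sc lam p) (mv (sc lam d) i (h - h1)) (mv (sc lam d) j h1) r)"
      using Ci by (subst sum_scale[OF T1[OF lam]], simp, subst sum_scale[OF T2[OF lam]], simp, simp)
    show "(\<Sum>j1\<le>j. ap2 n (sc lam d) (mv (sc lam d) i j1) (mv (sc lam d) h (j - j1)) r) =
      (\<Sum>h1\<le>h. ap2 n (sc lam d) (mv (sc lam d) i (h - h1)) (mv (sc lam p) j h1) r)"
      using Ci by (subst sum_scale[OF T1[OF lam]], simp, subst sum_scale[OF T2[OF lam]], simp, simp)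
  qed
qed


declare One_nat_def [simp del]

lemma powi_m1: "(x::'a::field) powi (int 1 - int 1 - int 1) = inverse x"
proof -
  have "int 1 - int 1 - int 1 = - 1" by simp
  then show ?thesis using power_int_minus[of x 1] by simp
qed

theorem corollary4p6:
  fixes n :: nat and p d :: "nat \<Rightarrow> nat \<Rightarrow> nat \<Rightarrow> 'a::{alg_closed_field, field_char_0}"
  assumes "n \<ge> 2"
    and "regular_q_cycle n p d"
    and "p 1 1 1 \<noteq> 0"
  shows "(\<exists>ps lam. equiv_via n p d lam (scc n 1 ps) (scc n 1 ps)) \<and>
         (\<forall>ps1 ps2 lam1 lam2.
            equiv_via n p d lam1 (scc n 1 ps1) (scc n 1 ps1) \<longrightarrow>
            equiv_via n p d lam2 (scc n 1 ps2) (scc n 1 ps2) \<longrightarrow>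
            (\<forall>u<n. \<forall>v<n. \<forall>w<n. scc n 1 ps1 u v w = scc n 1 ps2 u v w))"
proof -
  define c where "c = p 1 1 1"
  have c0: "c \<noteq> 0" using assms(3) by (simp add: c_def)
  have cyc': "regular_q_cycle n (sc c p) (sc c d)" by (rule sc_cycle[OF c0 assms(2)])
  have one: "sc c p 1 1 1 = 1"
    using c0 by (simp add: sc_def powi_m1 c_def)
  interpret Q: qcyc1 n "sc c p" "sc c d"
    by unfold_locales (use assms(1) cyc' one in simp_all)
  have ex: "equiv_via n p d c (scc n 1 Q.ps) (scc n 1 Q.ps)"
    unfolding equiv_via_def
  proof (intro conjI c0 allI impI)
    fix i j k assume ijk: "i < n" "j < n" "k < n"
    show "scc n 1 Q.ps i j k = c powi (int k - int i - int j) * p i j k"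
      using Q.p_scc[OF ijk] by (simp add: sc_def)
    show "scc n 1 Q.ps i j k = c powi (int k - int i - int j) * d i j k"
      using Q.d_scc[OF ijk] by (simp add: sc_def)
  qed
  have lam_c: "lam = c" if e: "equiv_via n p d lam (scc n 1 ps) (scc n 1 ps)" for lam ps
  proof -
    interpret S: std n ps by unfold_locales (rule assms(1))
    have l0: "lam \<noteq> 0" using e unfolding equiv_via_def by blast
    have "scc n 1 ps 1 1 1 = lam powi (int 1 - int 1 - int 1) * p 1 1 1"
      using e assms(1) unfolding equiv_via_def by auto
    then have "inverse lam * c = 1" using S.scc_111 by (simp add: powi_m1 c_def)
    then show ?thesis using l0 by (simp add: field_simps)
  qed
  show ?thesis
  proof (intro conjI exI allI impI)
    show "equiv_via n p d c (scc n 1 Q.ps) (scc n 1 Q.ps)" by (rule ex)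
  next
    fix ps1 ps2 lam1 lam2 u v w
    assume e1: "equiv_via n p d lam1 (scc n 1 ps1) (scc n 1 ps1)"
      and e2: "equiv_via n p d lam2 (scc n 1 ps2) (scc n 1 ps2)"
      and uvw: "u < n" "v < n" "w < n"
    have "lam1 = c" "lam2 = c" using lam_c e1 e2 by blast+
    then show "scc n 1 ps1 u v w = scc n 1 ps2 u v w"
      using e1 e2 uvw unfolding equiv_via_def by auto
  qed
qed


end
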